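(* Let $D:A\to\mathbf{qPOS}$ be a small diagram with $D(\alpha)=(\mathcal X_\alpha,R_\alpha)$. Let $\mathcal X$ with maps $J_\alpha:\mathcal X\to\mathcal X_\alpha$ be a limit in $\mathbf{qSet}$ of the underlying diagram of quantum sets. Then $R=\bigwedge_{\alpha\in A}J_\alpha^\dagger\circ R_\alpha\circ J_\alpha$ is a partial order on $\mathcal X$ (i.e. $(\mathcal X,R)$ is a quantum poset), and $(\mathcal X,R)$ together with the maps $J_\alpha$ is a limit of $D$ in $\mathbf{qPOS}$.
   Context: A quantum set $\mathcal X$ is a set $\mathrm{At}(\mathcal X)$ of nonzero finite-dimensional Hilbert spaces (atoms). A relation $R$ from $\mathcal X$ to $\mathcal Y$ is a choice of subspaces $R(X,Y)\subseteq L(X,Y)$ for all atoms. Composition: $(S\circ R)(X,Z)=\mathrm{span}\{sr: r\in R(X,Y), s\in S(Y,Z), Y\in\mathrm{At}(\mathcal Y)\}$; identity $I_{\mathcal X}(X,X)=\mathbb C 1_X$ and $0$ off the diagonal; adjoint $R^\dagger(Y,X)=\{r^\dagger: r\in R(X,Y)\}$; $R\le S$ entrywise inclusion; $\bigwedge$ entrywise intersection. A function $F:\mathcal X\to\mathcal Y$ is a relation with $F\circ F^\dagger\le I_{\mathcal Y}$ and $F^\dagger\circ F\ge I_{\mathcal X}$; quantum sets and functions form $\mathbf{qSet}$ (which is complete). A quantum poset is $(\mathcal X,R)$ with $I_{\mathcal X}\le R$, $R\circ R\le R$, $R\wedge R^\dagger\le I_{\mathcal X}$; a monotone map $F:(\mathcal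 X,R)\to(\mathcal Y,S)$ is a function with $F\circ R\le S\circ F$; these form $\mathbf{qPOS}$. *)

theory Defs
  imports Complex_Main "Jordan_Normal_Form.Matrix"
begin

text \<open>An atom is an element of an index type together with its (positive)
dimension; the atom with dimension n is the Hilbert space C^n (every nonzero
finite-dimensional Hilbert space is unitarily isomorphic to one of these), so
L(X,Y) is the space of (dim Y) x (dim X) complex matrices and the adjoint is
the conjugate transpose.\<close>

type_synonym 'a qset = "'a set \<times> ('a \<Rightarrow> nat)"

definition At :: "'a qset \<Rightarrow> 'a set" where "At X = fst X"
definition dm :: "'a qset \<Rightarrow> 'a \<Rightarrow> nat" where "dm X = snd X"

definition qset :: "'a qset \<Rightarrow> bool" where
  "qset X \<longleftrightarrow> (\<forall>a\<in>At X. 0 < dm X a)"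

text \<open>A relation assigns to atoms (a,b) a subspace of L(a,b); by convention it
is the empty set off the atoms, so that equality of relations is literal.\<close>

type_synonym ('a,'b) qrel = "'a \<Rightarrow> 'b \<Rightarrow> complex mat set"

definition mat_subspace :: "nat \<Rightarrow> nat \<Rightarrow> complex mat set \<Rightarrow> bool" where
  "mat_subspace n m S \<longleftrightarrow> S \<subseteq> carrier_mat n m \<and> 0\<^sub>m n m \<in> S
     \<and> (\<forall>x\<in>S. \<forall>y\<in>S. x + y \<in> S) \<and> (\<forall>c x. x \<in> S \<longrightarrow> c \<cdot>\<^sub>m x \<in> S)"

inductive_set mat_span :: "nat \<Rightarrow> nat \<Rightarrow> complex mat set \<Rightarrow> complex mat set"
  for n m S where
  zero: "0\<^sub>m n m \<in> mat_span n m S"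
| step: "x \<in> S \<Longrightarrow> y \<in> mat_span n m S \<Longrightarrow> c \<cdot>\<^sub>m x + y \<in> mat_span n m S"

definition cadj :: "complex mat \<Rightarrow> complex mat" where
  "cadj A = mat (dim_col A) (dim_row A) (\<lambda>(i,j). cnj (A $$ (j,i)))"

definition is_qrel :: "'a qset \<Rightarrow> 'b qset \<Rightarrow> ('a,'b) qrel \<Rightarrow> bool" where
  "is_qrel X Y R \<longleftrightarrow> (\<forall>a b. if a \<in> At X \<and> b \<in> At Y
       then mat_subspace (dm Y b) (dm X a) (R a b) else R a b = {})"

definition qcomp :: "'a qset \<Rightarrow> 'b qset \<Rightarrow> 'c qset \<Rightarrow> ('b,'c) qrel \<Rightarrow> ('a,'b) qrel \<Rightarrow> ('a,'c) qrel" where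
  "qcomp X Y Z S R = (\<lambda>a c. if a \<in> At X \<and> c \<in> At Z then
      mat_span (dm Z c) (dm X a) {s * r | r s b. b \<in> At Y \<and> r \<in> R a b \<and> s \<in> S b c}
    else {})"

definition qid :: "'a qset \<Rightarrow> ('a,'a) qrel" where
  "qid X = (\<lambda>a a'. if a \<in> At X \<and> a' \<in> At X then
      (if a = a' then {c \<cdot>\<^sub>m 1\<^sub>m (dm X a) | c. True} else {0\<^sub>m (dm X a') (dm X a)})
    else {})"

definition qadj :: "('a,'b) qrel \<Rightarrow> ('b,'a) qrel" where
  "qadj R = (\<lambda>b a. cadj ` R a b)"

definition qle :: "('a,'b) qrel \<Rightarrow> ('a,'b) qrel \<Rightarrow> bool" where
  "qle R S \<longleftrightarrow> (\<forall>a b. R a b \<subseteq> S a b)"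

definition qinf :: "('a,'b) qrel \<Rightarrow> ('a,'b) qrel \<Rightarrow> ('a,'b) qrel" where
  "qinf R S = (\<lambda>a b. R a b \<inter> S a b)"

text \<open>Meet of a family of relations X -> Y indexed by I (top relation if I is empty).\<close>
definition qMeet :: "'a qset \<Rightarrow> 'b qset \<Rightarrow> 'o set \<Rightarrow> ('o \<Rightarrow> ('a,'b) qrel) \<Rightarrow> ('a,'b) qrel" where
  "qMeet X Y I Rs = (\<lambda>a b. if a \<in> At X \<and> b \<in> At Y then
      carrier_mat (dm Y b) (dm X a) \<inter> (\<Inter>i\<in>I. Rs i a b) else {})"

definition qfun :: "'a qset \<Rightarrow> 'b qset \<Rightarrow> ('a,'b) qrel \<Rightarrow> bool" where
  "qfun X Y F \<longleftrightarrow> is_qrel X Y F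
     \<and> qle (qcomp Y X Y F (qadj F)) (qid Y)
     \<and> qle (qid X) (qcomp X Y X (qadj F) F)"

definition qposet :: "'a qset \<Rightarrow> ('a,'a) qrel \<Rightarrow> bool" where
  "qposet X R \<longleftrightarrow> qset X \<and> is_qrel X X R \<and> qle (qid X) R \<and> qle (qcomp X X X R R) R
     \<and> qle (qinf R (qadj R)) (qid X)"

definition qmono :: "'a qset \<Rightarrow> ('a,'a) qrel \<Rightarrow> 'b qset \<Rightarrow> ('b,'b) qrel \<Rightarrow> ('a,'b) qrel \<Rightarrow> bool" where
  "qmono X R Y S F \<longleftrightarrow> qfun X Y F \<and> qle (qcomp X X Y F R) (qcomp X Y Y S F)"

definition small_category ::
  "'o set \<Rightarrow> 'm set \<Rightarrow> ('m \<Rightarrow> 'o) \<Rightarrow> ('m \<Rightarrow> 'o) \<Rightarrow> ('m \<Rightarrow> 'm \<Rightarrow> 'm) \<Rightarrow> ('o \<Rightarrow> 'm) \<Rightarrow> bool" where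
  "small_category Ob Ar src tgt cmp idA \<longleftrightarrow>
     (\<forall>f\<in>Ar. src f \<in> Ob \<and> tgt f \<in> Ob)
   \<and> (\<forall>x\<in>Ob. idA x \<in> Ar \<and> src (idA x) = x \<and> tgt (idA x) = x)
   \<and> (\<forall>f\<in>Ar. \<forall>g\<in>Ar. tgt f = src g \<longrightarrow>
        cmp g f \<in> Ar \<and> src (cmp g f) = src f \<and> tgt (cmp g f) = tgt g)
   \<and> (\<forall>f\<in>Ar. cmp f (idA (src f)) = f \<and> cmp (idA (tgt f)) f = f)
   \<and> (\<forall>f\<in>Ar. \<forall>g\<in>Ar. \<forall>h\<in>Ar. tgt f = src g \<and> tgt g = src h \<longrightarrow>
        cmp h (cmp g f) = cmp (cmp h g) f)"

definition qpos_diagram ::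
  "'o set \<Rightarrow> 'm set \<Rightarrow> ('m \<Rightarrow> 'o) \<Rightarrow> ('m \<Rightarrow> 'o) \<Rightarrow> ('m \<Rightarrow> 'm \<Rightarrow> 'm) \<Rightarrow> ('o \<Rightarrow> 'm)
   \<Rightarrow> ('o \<Rightarrow> 'b qset) \<Rightarrow> ('o \<Rightarrow> ('b,'b) qrel) \<Rightarrow> ('m \<Rightarrow> ('b,'b) qrel) \<Rightarrow> bool" where
  "qpos_diagram Ob Ar src tgt cmp idA DX DR DF \<longleftrightarrow>
     (\<forall>x\<in>Ob. qposet (DX x) (DR x))
   \<and> (\<forall>f\<in>Ar. qmono (DX (src f)) (DR (src f)) (DX (tgt f)) (DR (tgt f)) (DF f))
   \<and> (\<forall>x\<in>Ob. DF (idA x) = qid (DX x))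
   \<and> (\<forall>f\<in>Ar. \<forall>g\<in>Ar. tgt f = src g \<longrightarrow>
        DF (cmp g f) = qcomp (DX (src f)) (DX (tgt f)) (DX (tgt g)) (DF g) (DF f))"

definition qset_cone ::
  "'o set \<Rightarrow> 'm set \<Rightarrow> ('m \<Rightarrow> 'o) \<Rightarrow> ('m \<Rightarrow> 'o) \<Rightarrow> ('o \<Rightarrow> 'b qset) \<Rightarrow> ('m \<Rightarrow> ('b,'b) qrel)
   \<Rightarrow> 'y qset \<Rightarrow> ('o \<Rightarrow> ('y,'b) qrel) \<Rightarrow> bool" where
  "qset_cone Ob Ar src tgt DX DF Y K \<longleftrightarrow>
     (\<forall>x\<in>Ob. qfun Y (DX x) (K x))
   \<and> (\<forall>f\<in>Ar. qcomp Y (DX (src f)) (DX (tgt f)) (DF f) (K (src f)) = K (tgt f))"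

text \<open>Limit in qSet. Test objects (other cones) range over quantum sets whose
atoms are indexed by the type 'y (passed as TYPE('y)).\<close>
definition qset_limit ::
  "'y itself \<Rightarrow> 'o set \<Rightarrow> 'm set \<Rightarrow> ('m \<Rightarrow> 'o) \<Rightarrow> ('m \<Rightarrow> 'o) \<Rightarrow> ('o \<Rightarrow> 'b qset) \<Rightarrow> ('m \<Rightarrow> ('b,'b) qrel)
   \<Rightarrow> 'x qset \<Rightarrow> ('o \<Rightarrow> ('x,'b) qrel) \<Rightarrow> bool" where
  "qset_limit (_ :: 'y itself) Ob Ar src tgt DX DF X J \<longleftrightarrow>
     qset X \<and> qset_cone Ob Ar src tgt DX DF X J
   \<and> (\<forall>(Y :: 'y qset) K. qset Y \<and> qset_cone Ob Ar src tgt DX DF Y K \<longrightarrow>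
        (\<exists>!F. qfun Y X F \<and> (\<forall>x\<in>Ob. qcomp Y X (DX x) (J x) F = K x)))"

definition qpos_cone ::
  "'o set \<Rightarrow> 'm set \<Rightarrow> ('m \<Rightarrow> 'o) \<Rightarrow> ('m \<Rightarrow> 'o) \<Rightarrow> ('o \<Rightarrow> 'b qset) \<Rightarrow> ('o \<Rightarrow> ('b,'b) qrel)
   \<Rightarrow> ('m \<Rightarrow> ('b,'b) qrel) \<Rightarrow> 'y qset \<Rightarrow> ('y,'y) qrel \<Rightarrow> ('o \<Rightarrow> ('y,'b) qrel) \<Rightarrow> bool" where
  "qpos_cone Ob Ar src tgt DX DR DF Y S K \<longleftrightarrow>
     (\<forall>x\<in>Ob. qmono Y S (DX x) (DR x) (K x))
   \<and> (\<forall>f\<in>Ar. qcomp Y (DX (src f)) (DX (tgt f)) (DF f) (K (src f)) = K (tgt f))"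

definition qpos_limit ::
  "'y itself \<Rightarrow> 'o set \<Rightarrow> 'm set \<Rightarrow> ('m \<Rightarrow> 'o) \<Rightarrow> ('m \<Rightarrow> 'o) \<Rightarrow> ('o \<Rightarrow> 'b qset)
   \<Rightarrow> ('o \<Rightarrow> ('b,'b) qrel) \<Rightarrow> ('m \<Rightarrow> ('b,'b) qrel)
   \<Rightarrow> 'x qset \<Rightarrow> ('x,'x) qrel \<Rightarrow> ('o \<Rightarrow> ('x,'b) qrel) \<Rightarrow> bool" where
  "qpos_limit (_ :: 'y itself) Ob Ar src tgt DX DR DF X R J \<longleftrightarrow>
     qposet X R \<and> qpos_cone Ob Ar src tgt DX DR DF X R J
   \<and> (\<forall>(Y :: 'y qset) S K. qposet Y S \<and> qpos_cone Ob Ar src tgt DX DR DF Y S K \<longrightarrow>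
        (\<exists>!F. qmono Y S X R F \<and> (\<forall>x\<in>Ob. qcomp Y X (DX x) (J x) F = K x)))"

end

theory Submission
  imports Defs "Jordan_Normal_Form.Schur_Decomposition"
begin


lemma cadj_dims[simp]: "dim_row (cadj A) = dim_col A" "dim_col (cadj A) = dim_row A"
  unfolding cadj_def by simp_all
lemma cadj_index[simp]: "i < dim_col A \<Longrightarrow> j < dim_row A \<Longrightarrow> cadj A $$ (i,j) = cnj (A $$ (j,i))"
  unfolding cadj_def by (simp add: index_mat)
lemma cadj_carrier[simp]: "A \<in> carrier_mat n m \<Longrightarrow> cadj A \<in> carrier_mat m n"
  unfolding carrier_mat_def by simp
lemma cadj_cadj[simp]: "cadj (cadj A) = A"
  by (rule eq_matI) simp_all
lemma cadj_mult: assumes "A \<in> carrier_mat n k" "B \<in> carrier_mat k m"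
  shows "cadj (A * B) = cadj B * cadj A"
proof (rule eq_matI)
  fix i j assume i: "i < dim_row (cadj B * cadj A)" and j: "j < dim_col (cadj B * cadj A)"
  have ii: "i < m" and jj: "j < n" using i j assms by auto
  have "cadj (A * B) $$ (i,j) = cnj (\<Sum>l<k. A $$ (j,l) * B $$ (l,i))"
    using assms ii jj by (simp add: scalar_prod_def atLeast0LessThan)
  also have "\<dots> = (\<Sum>l<k. cnj (B $$ (l,i)) * cnj (A $$ (j,l)))"
    by (simp add: mult.commute)
  also have "\<dots> = (cadj B * cadj A) $$ (i,j)"
    using assms ii jj by (simp add: scalar_prod_def atLeast0LessThan)
  finally show "cadj (A * B) $$ (i,j) = (cadj B * cadj A) $$ (i,j)" .
next
  show "dim_row (cadj (A * B)) = dim_row (cadj B * cadj A)" by simp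
next
  show "dim_col (cadj (A * B)) = dim_col (cadj B * cadj A)" by simp
qed
lemma cadj_add: assumes "A \<in> carrier_mat n m" "B \<in> carrier_mat n m"
  shows "cadj (A + B) = cadj A + cadj B"
  using assms by (intro eq_matI) simp_all
lemma cadj_minus: assumes "A \<in> carrier_mat n m" "B \<in> carrier_mat n m"
  shows "cadj (A - B) = cadj A - cadj B"
  using assms by (intro eq_matI) simp_all
lemma cadj_smult[simp]: "cadj (c \<cdot>\<^sub>m A) = cnj c \<cdot>\<^sub>m cadj A"
  by (intro eq_matI) simp_all
lemma cadj_zero[simp]: "cadj (0\<^sub>m n m) = 0\<^sub>m m n"
  by (intro eq_matI) simp_all
lemma cadj_one[simp]: "cadj (1\<^sub>m n) = 1\<^sub>m n"
  by (intro eq_matI) (simp_all add: one_mat_def)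
lemma cadj_inj: "cadj A = cadj B \<Longrightarrow> A = B"
  by (metis cadj_cadj)



lemma span_carrier: assumes "S \<subseteq> carrier_mat n m" "x \<in> mat_span n m S"
  shows "x \<in> carrier_mat n m"
  using assms(2) by induct (use assms(1) in auto)

lemma subspaceD: assumes "mat_subspace n m V"
  shows "V \<subseteq> carrier_mat n m" "0\<^sub>m n m \<in> V" "x \<in> V \<Longrightarrow> y \<in> V \<Longrightarrow> x + y \<in> V"
    "x \<in> V \<Longrightarrow> c \<cdot>\<^sub>m x \<in> V"
  using assms unfolding mat_subspace_def by auto

lemma span_sub: assumes "mat_subspace n m V" "S \<subseteq> V"
  shows "mat_span n m S \<subseteq> V"
proof
  fix x assume "x \<in> mat_span n m S"
  then show "x \<in> V"
    by induct (use assms subspaceD[OF assms(1)] in blast)+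
qed

lemma span_inc: assumes "S \<subseteq> carrier_mat n m" "x \<in> S"
  shows "x \<in> mat_span n m S"
proof -
  have "1 \<cdot>\<^sub>m x + 0\<^sub>m n m \<in> mat_span n m S" by (rule mat_span.step[OF assms(2) mat_span.zero])
  moreover have "1 \<cdot>\<^sub>m x + 0\<^sub>m n m = x" using assms by (intro eq_matI) auto
  ultimately show ?thesis by simp
qed

lemma span_add: assumes S: "S \<subseteq> carrier_mat n m" and x: "x \<in> mat_span n m S" and y: "y \<in> mat_span n m S"
  shows "x + y \<in> mat_span n m S"
  using x
proof induct
  case zero
  have "y \<in> carrier_mat n m" using span_carrier[OF S y] .
  then show ?case using y by simp
next
  case (step s x c)
  have s: "s \<in> carrier_mat n m" using step S by auto
  have xc: "x \<in> carrier_mat n m" using span_carrier[OF S step(2)] .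
  have yc: "y \<in> carrier_mat n m" using span_carrier[OF S y] .
  have "c \<cdot>\<^sub>m s + x + y = c \<cdot>\<^sub>m s + (x + y)" using assoc_add_mat[OF smult_carrier_mat[OF s] xc yc] .
  then show ?case using mat_span.step[OF step(1) step(3)] by simp
qed

lemma span_smult: assumes S: "S \<subseteq> carrier_mat n m" and x: "x \<in> mat_span n m S"
  shows "k \<cdot>\<^sub>m x \<in> mat_span n m S"
  using x
proof induct
  case zero
  then show ?case using mat_span.zero by simp
next
  case (step s x c)
  have s: "s \<in> carrier_mat n m" using step S by auto
  have xc: "x \<in> carrier_mat n m" using span_carrier[OF S step(2)] .
  have "k \<cdot>\<^sub>m (c \<cdot>\<^sub>m s + x) = (k * c) \<cdot>\<^sub>m s + k \<cdot>\<^sub>m x"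
    using s xc by (intro eq_matI) (auto simp: algebra_simps)
  then show ?case using mat_span.step[OF step(1) step(3)] by simp
qed

lemma span_subspace: assumes "S \<subseteq> carrier_mat n m"
  shows "mat_subspace n m (mat_span n m S)"
  unfolding mat_subspace_def using span_carrier[OF assms] span_add[OF assms] span_smult[OF assms]
    mat_span.zero by blast

lemma span_mono: assumes "S \<subseteq> S'" shows "mat_span n m S \<subseteq> mat_span n m S'"
proof
  fix x assume "x \<in> mat_span n m S" then show "x \<in> mat_span n m S'"
    by induct (use assms in \<open>auto intro: mat_span.intros\<close>)
qed

lemma span_idem: assumes "mat_subspace n m V" shows "mat_span n m V = V"
  using span_sub[OF assms] span_inc[OF subspaceD(1)[OF assms]] by blast

lemma span_image_sub:
  assumes S: "S \<subseteq> carrier_mat n m" and V: "mat_subspace n' m' V"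
    and f0: "f (0\<^sub>m n m) \<in> V"
    and fstep: "\<And>s y c. s \<in> S \<Longrightarrow> y \<in> carrier_mat n m \<Longrightarrow> f y \<in> V \<Longrightarrow> f (c \<cdot>\<^sub>m s + y) \<in> V"
    and x: "x \<in> mat_span n m S"
  shows "f x \<in> V"
  using x
proof induct
  case zero then show ?case using f0 .
next
  case (step s y c) then show ?case using fstep span_carrier[OF S] by blast
qed



lemma qrelD: "is_qrel X Y R \<Longrightarrow> a \<in> At X \<Longrightarrow> b \<in> At Y \<Longrightarrow> mat_subspace (dm Y b) (dm X a) (R a b)"
  unfolding is_qrel_def by metis
lemma qrel_off: "is_qrel X Y R \<Longrightarrow> \<not> (a \<in> At X \<and> b \<in> At Y) \<Longrightarrow> R a b = {}"
  unfolding is_qrel_def by metis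
lemma qrel_mem: assumes "is_qrel X Y R" "r \<in> R a b"
  shows "a \<in> At X" "b \<in> At Y" "r \<in> carrier_mat (dm Y b) (dm X a)"
proof -
  show a: "a \<in> At X" and b: "b \<in> At Y" using qrel_off[OF assms(1), of a b] assms(2) by auto
  show "r \<in> carrier_mat (dm Y b) (dm X a)" using subspaceD(1)[OF qrelD[OF assms(1) a b]] assms(2) by auto
qed
lemma qrel_zero: "is_qrel X Y R \<Longrightarrow> a \<in> At X \<Longrightarrow> b \<in> At Y \<Longrightarrow> 0\<^sub>m (dm Y b) (dm X a) \<in> R a b"
  by (rule subspaceD(2)[OF qrelD])
lemma qrel_add: assumes "is_qrel X Y R" "x \<in> R a b" "y \<in> R a b" shows "x + y \<in> R a b"
  by (rule subspaceD(3)[OF qrelD[OF assms(1) qrel_mem(1,2)[OF assms(1,2)]] assms(2,3)])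
lemma qrel_smult: assumes "is_qrel X Y R" "x \<in> R a b" shows "c \<cdot>\<^sub>m x \<in> R a b"
  by (rule subspaceD(4)[OF qrelD[OF assms(1) qrel_mem(1,2)[OF assms(1,2)]] assms(2)])
lemma qrelI: assumes "\<And>a b. a \<in> At X \<Longrightarrow> b \<in> At Y \<Longrightarrow> mat_subspace (dm Y b) (dm X a) (R a b)"
  "\<And>a b. \<not> (a \<in> At X \<and> b \<in> At Y) \<Longrightarrow> R a b = {}"
  shows "is_qrel X Y R"
  unfolding is_qrel_def using assms by auto

definition gens :: "'a qset \<Rightarrow> 'b qset \<Rightarrow> 'c qset \<Rightarrow> ('b,'c) qrel \<Rightarrow> ('a,'b) qrel \<Rightarrow> 'a \<Rightarrow> 'c \<Rightarrow> complex mat set" where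
  "gens X Y Z S R a c = {s * r | r s b. b \<in> At Y \<and> r \<in> R a b \<and> s \<in> S b c}"

lemma qcomp_gens: "a \<in> At X \<Longrightarrow> c \<in> At Z \<Longrightarrow> qcomp X Y Z S R a c = mat_span (dm Z c) (dm X a) (gens X Y Z S R a c)"
  unfolding qcomp_def gens_def by simp
lemma qcomp_off: "\<not> (a \<in> At X \<and> c \<in> At Z) \<Longrightarrow> qcomp X Y Z S R a c = {}"
  unfolding qcomp_def by auto

lemma gens_carrier: assumes "is_qrel X Y R" "is_qrel Y Z S"
  shows "gens X Y Z S R a c \<subseteq> carrier_mat (dm Z c) (dm X a)"
proof
  fix x assume "x \<in> gens X Y Z S R a c"
  then obtain r s b where x: "x = s * r" and r: "r \<in> R a b" and s: "s \<in> S b c" unfolding gens_def by auto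
  show "x \<in> carrier_mat (dm Z c) (dm X a)" unfolding x
    using qrel_mem(3)[OF assms(1) r] qrel_mem(3)[OF assms(2) s] by (rule mult_carrier_mat[rotated])
qed

lemma qcomp_rel: assumes "is_qrel X Y R" "is_qrel Y Z S"
  shows "is_qrel X Z (qcomp X Y Z S R)"
proof (rule qrelI)
  fix a c assume "a \<in> At X" "c \<in> At Z"
  show "mat_subspace (dm Z c) (dm X a) (qcomp X Y Z S R a c)"
    unfolding qcomp_gens[OF \<open>a \<in> At X\<close> \<open>c \<in> At Z\<close>]
    by (rule span_subspace[OF gens_carrier[OF assms]])
qed (rule qcomp_off)

lemma qcomp_memI: assumes "is_qrel X Y R" "is_qrel Y Z S" "r \<in> R a b" "s \<in> S b c"
  shows "s * r \<in> qcomp X Y Z S R a c"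
proof -
  have a: "a \<in> At X" and b: "b \<in> At Y" and c: "c \<in> At Z"
    using qrel_mem(1,2)[OF assms(1,3)] qrel_mem(2)[OF assms(2,4)] by auto
  have "s * r \<in> gens X Y Z S R a c" unfolding gens_def using assms(3,4) b by blast
  then show ?thesis unfolding qcomp_gens[OF a c] by (rule span_inc[OF gens_carrier[OF assms(1,2)]])
qed

lemma qcomp_leI: assumes W: "is_qrel X Z W"
  and H: "\<And>a c b r s. a \<in> At X \<Longrightarrow> c \<in> At Z \<Longrightarrow> b \<in> At Y \<Longrightarrow> r \<in> R a b \<Longrightarrow> s \<in> S b c \<Longrightarrow> s * r \<in> W a c"
  shows "qle (qcomp X Y Z S R) W"
  unfolding qle_def
proof (intro allI)
  fix a c
  show "qcomp X Y Z S R a c \<subseteq> W a c"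
  proof (cases "a \<in> At X \<and> c \<in> At Z")
    case True
    have "gens X Y Z S R a c \<subseteq> W a c"
    proof
      fix x assume "x \<in> gens X Y Z S R a c"
      then obtain r s b where "x = s * r" "b \<in> At Y" "r \<in> R a b" "s \<in> S b c" unfolding gens_def by blast
      then show "x \<in> W a c" using H True by blast
    qed
    then show ?thesis unfolding qcomp_gens[OF conjunct1[OF True] conjunct2[OF True]]
      by (intro span_sub qrelD[OF W] conjunct1[OF True] conjunct2[OF True])
  qed (simp add: qcomp_off)
qed

lemma qcomp_mono: assumes "qle R R'" "qle S S'"
  shows "qle (qcomp X Y Z S R) (qcomp X Y Z S' R')"
  unfolding qle_def
proof (intro allI)
  fix a c
  show "qcomp X Y Z S R a c \<subseteq> qcomp X Y Z S' R' a c"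
  proof (cases "a \<in> At X \<and> c \<in> At Z")
    case True
    have "gens X Y Z S R a c \<subseteq> gens X Y Z S' R' a c"
      using assms unfolding gens_def qle_def by blast
    then show ?thesis unfolding qcomp_gens[OF conjunct1[OF True] conjunct2[OF True]]
      by (rule span_mono)
  qed (simp add: qcomp_off)
qed

lemma qle_refl[simp]: "qle R R" unfolding qle_def by simp
lemma qle_trans: "qle R S \<Longrightarrow> qle S T \<Longrightarrow> qle R T" unfolding qle_def by blast
lemma qle_antisym: "qle R S \<Longrightarrow> qle S R \<Longrightarrow> R = S" unfolding qle_def by (intro ext) blast

lemma qcomp_induct:
  assumes R: "is_qrel X Y R" and S: "is_qrel Y Z S" and V: "mat_subspace n' m' V"
    and u: "u \<in> qcomp X Y Z S R a c"
    and f0: "f (0\<^sub>m (dm Z c) (dm X a)) \<in> V"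
    and fstep: "\<And>r s b y k. b \<in> At Y \<Longrightarrow> r \<in> R a b \<Longrightarrow> s \<in> S b c \<Longrightarrow> y \<in> carrier_mat (dm Z c) (dm X a)
        \<Longrightarrow> f y \<in> V \<Longrightarrow> f (k \<cdot>\<^sub>m (s * r) + y) \<in> V"
  shows "f u \<in> V"
proof -
  have ac: "a \<in> At X \<and> c \<in> At Z" using u qcomp_off by fastforce
  have u': "u \<in> mat_span (dm Z c) (dm X a) (gens X Y Z S R a c)"
    using u qcomp_gens ac by metis
  have step: "\<And>s y k. s \<in> gens X Y Z S R a c \<Longrightarrow> y \<in> carrier_mat (dm Z c) (dm X a) \<Longrightarrow> f y \<in> V \<Longrightarrow> f (k \<cdot>\<^sub>m s + y) \<in> V"
  proof -
    fix s y k assume "s \<in> gens X Y Z S R a c" "y \<in> carrier_mat (dm Z c) (dm X a)" "f y \<in> V"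
    then obtain r s' b where "s = s' * r" "b \<in> At Y" "r \<in> R a b" "s' \<in> S b c" unfolding gens_def by blast
    then show "f (k \<cdot>\<^sub>m s + y) \<in> V" using fstep \<open>y \<in> _\<close> \<open>f y \<in> V\<close> by blast
  qed
  show ?thesis
    by (rule span_image_sub[OF gens_carrier[OF R S, of a c] V f0 step u'])
qed



lemma mat_l1: fixes t s y r :: "complex mat" assumes t: "t \<in> carrier_mat n k" and s: "s \<in> carrier_mat k l" and y: "y \<in> carrier_mat n l"
  and r: "r \<in> carrier_mat l m"
  shows "(c \<cdot>\<^sub>m (t * s) + y) * r = c \<cdot>\<^sub>m (t * (s * r)) + y * r"
proof -
  have ts: "t * s \<in> carrier_mat n l" using t s by simp
  have "(c \<cdot>\<^sub>m (t * s) + y) * r = (c \<cdot>\<^sub>m (t * s)) * r + y * r"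
    by (rule add_mult_distrib_mat[OF smult_carrier_mat[OF ts] y r])
  also have "(c \<cdot>\<^sub>m (t * s)) * r = c \<cdot>\<^sub>m ((t * s) * r)" by (rule mult_smult_assoc_mat[OF ts r])
  also have "(t * s) * r = t * (s * r)" by (rule assoc_mult_mat[OF t s r])
  finally show ?thesis .
qed

lemma mat_l2: fixes t s y r :: "complex mat" assumes t: "t \<in> carrier_mat n k" and s: "s \<in> carrier_mat k l" and r: "r \<in> carrier_mat l m"
  and y: "y \<in> carrier_mat k m"
  shows "t * (c \<cdot>\<^sub>m (s * r) + y) = c \<cdot>\<^sub>m ((t * s) * r) + t * y"
proof -
  have sr: "s * r \<in> carrier_mat k m" using s r by simp
  have "t * (c \<cdot>\<^sub>m (s * r) + y) = t * (c \<cdot>\<^sub>m (s * r)) + t * y"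
    by (rule mult_add_distrib_mat[OF t smult_carrier_mat[OF sr] y])
  also have "t * (c \<cdot>\<^sub>m (s * r)) = c \<cdot>\<^sub>m (t * (s * r))" by (rule mult_smult_distrib[OF t sr])
  also have "t * (s * r) = (t * s) * r" by (rule assoc_mult_mat[OF t s r, symmetric])
  finally show ?thesis .
qed

lemma qcomp_assoc_le1: assumes R: "is_qrel X Y R" and S: "is_qrel Y Z S" and T: "is_qrel Z W T"
  shows "qle (qcomp X Y W (qcomp Y Z W T S) R) (qcomp X Z W T (qcomp X Y Z S R))"
proof (rule qcomp_leI)
  have SR: "is_qrel X Z (qcomp X Y Z S R)" by (rule qcomp_rel[OF R S])
  have TS: "is_qrel Y W (qcomp Y Z W T S)" by (rule qcomp_rel[OF S T])
  show RHS: "is_qrel X W (qcomp X Z W T (qcomp X Y Z S R))" by (rule qcomp_rel[OF SR T])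
  fix a d b r u assume a: "a \<in> At X" and d: "d \<in> At W" and b: "b \<in> At Y" and r: "r \<in> R a b"
    and u: "u \<in> qcomp Y Z W T S b d"
  have rc: "r \<in> carrier_mat (dm Y b) (dm X a)" by (rule qrel_mem(3)[OF R r])
  show "u * r \<in> qcomp X Z W T (qcomp X Y Z S R) a d"
  proof (rule qcomp_induct[OF S T qrelD[OF RHS a d] u, where f = "\<lambda>u. u * r"])
    show "0\<^sub>m (dm W d) (dm Y b) * r \<in> qcomp X Z W T (qcomp X Y Z S R) a d"
      using qrel_zero[OF RHS a d] rc by simp
  next
    fix s t c y k assume c: "c \<in> At Z" and s: "s \<in> S b c" and t: "t \<in> T c d"
      and y: "y \<in> carrier_mat (dm W d) (dm Y b)" and yr: "y * r \<in> qcomp X Z W T (qcomp X Y Z S R) a d"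
    have eq: "(k \<cdot>\<^sub>m (t * s) + y) * r = k \<cdot>\<^sub>m (t * (s * r)) + y * r"
      by (rule mat_l1[OF qrel_mem(3)[OF T t] qrel_mem(3)[OF S s] y rc])
    have "t * (s * r) \<in> qcomp X Z W T (qcomp X Y Z S R) a d"
      by (rule qcomp_memI[OF SR T qcomp_memI[OF R S r s] t])
    then show "(k \<cdot>\<^sub>m (t * s) + y) * r \<in> qcomp X Z W T (qcomp X Y Z S R) a d"
      unfolding eq by (intro qrel_add[OF RHS] qrel_smult[OF RHS] yr)
  qed
qed

lemma qcomp_assoc_le2: assumes R: "is_qrel X Y R" and S: "is_qrel Y Z S" and T: "is_qrel Z W T"
  shows "qle (qcomp X Z W T (qcomp X Y Z S R)) (qcomp X Y W (qcomp Y Z W T S) R)"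
proof (rule qcomp_leI)
  have SR: "is_qrel X Z (qcomp X Y Z S R)" by (rule qcomp_rel[OF R S])
  have TS: "is_qrel Y W (qcomp Y Z W T S)" by (rule qcomp_rel[OF S T])
  show LHS: "is_qrel X W (qcomp X Y W (qcomp Y Z W T S) R)" by (rule qcomp_rel[OF R TS])
  fix a d c v t assume a: "a \<in> At X" and d: "d \<in> At W" and c: "c \<in> At Z" and v: "v \<in> qcomp X Y Z S R a c"
    and t: "t \<in> T c d"
  have tc: "t \<in> carrier_mat (dm W d) (dm Z c)" by (rule qrel_mem(3)[OF T t])
  show "t * v \<in> qcomp X Y W (qcomp Y Z W T S) R a d"
  proof (rule qcomp_induct[OF R S qrelD[OF LHS a d] v, where f = "\<lambda>v. t * v"])
    show "t * 0\<^sub>m (dm Z c) (dm X a) \<in> qcomp X Y W (qcomp Y Z W T S) R a d"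
      using qrel_zero[OF LHS a d] tc by simp
  next
    fix r s b y k assume b: "b \<in> At Y" and r: "r \<in> R a b" and s: "s \<in> S b c"
      and y: "y \<in> carrier_mat (dm Z c) (dm X a)" and ty: "t * y \<in> qcomp X Y W (qcomp Y Z W T S) R a d"
    have eq: "t * (k \<cdot>\<^sub>m (s * r) + y) = k \<cdot>\<^sub>m ((t * s) * r) + t * y"
      by (rule mat_l2[OF tc qrel_mem(3)[OF S s] qrel_mem(3)[OF R r] y])
    have "(t * s) * r \<in> qcomp X Y W (qcomp Y Z W T S) R a d"
      by (rule qcomp_memI[OF R TS r qcomp_memI[OF S T s t]])
    then show "t * (k \<cdot>\<^sub>m (s * r) + y) \<in> qcomp X Y W (qcomp Y Z W T S) R a d"
      unfolding eq by (intro qrel_add[OF LHS] qrel_smult[OF LHS] ty)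
  qed
qed

lemma qcomp_assoc: assumes R: "is_qrel X Y R" and S: "is_qrel Y Z S" and T: "is_qrel Z W T"
  shows "qcomp X Y W (qcomp Y Z W T S) R = qcomp X Z W T (qcomp X Y Z S R)"
  by (rule qle_antisym[OF qcomp_assoc_le1[OF assms] qcomp_assoc_le2[OF assms]])

lemma scal_mem: "k \<cdot>\<^sub>m 1\<^sub>m n \<in> {c \<cdot>\<^sub>m 1\<^sub>m n | c. True}" by blast
lemma zero_scal: "0\<^sub>m n n = (0::complex) \<cdot>\<^sub>m 1\<^sub>m n" by (rule eq_matI) auto
lemma one_scal: "1\<^sub>m n = (1::complex) \<cdot>\<^sub>m 1\<^sub>m n" by (rule eq_matI) auto

lemma qid_same: "a \<in> At X \<Longrightarrow> qid X a a = {c \<cdot>\<^sub>m 1\<^sub>m (dm X a) | c. True}"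
  unfolding qid_def by simp
lemma qid_diff: "a \<in> At X \<Longrightarrow> a' \<in> At X \<Longrightarrow> a \<noteq> a' \<Longrightarrow> qid X a a' = {0\<^sub>m (dm X a') (dm X a)}"
  unfolding qid_def by simp
lemma qid_off: assumes "\<not> (a \<in> At X \<and> a' \<in> At X)" shows "qid X a a' = {}"
  unfolding qid_def by (rule if_not_P[OF assms])

lemma scal_subspace: "mat_subspace n n {c \<cdot>\<^sub>m 1\<^sub>m n | c::complex. True}"
  unfolding mat_subspace_def
proof (intro conjI ballI allI impI)
  show "0\<^sub>m n n \<in> {c \<cdot>\<^sub>m 1\<^sub>m n | c::complex. True}"
    by (subst zero_scal) (rule scal_mem)
next
  fix x y assume "x \<in> {c \<cdot>\<^sub>m 1\<^sub>m n | c::complex. True}" "y \<in> {c \<cdot>\<^sub>m 1\<^sub>m n | c::complex. True}"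
  then obtain c1 c2 where "x = c1 \<cdot>\<^sub>m 1\<^sub>m n" "y = c2 \<cdot>\<^sub>m 1\<^sub>m n" by blast
  moreover have "c1 \<cdot>\<^sub>m 1\<^sub>m n + c2 \<cdot>\<^sub>m 1\<^sub>m n = (c1 + c2) \<cdot>\<^sub>m 1\<^sub>m n"
    by (rule eq_matI) (auto simp: algebra_simps)
  ultimately show "x + y \<in> {c \<cdot>\<^sub>m 1\<^sub>m n | c::complex. True}" by blast
next
  fix c :: complex and x assume "x \<in> {c \<cdot>\<^sub>m 1\<^sub>m n | c::complex. True}"
  then obtain c1 where "x = c1 \<cdot>\<^sub>m 1\<^sub>m n" by blast
  moreover have "c \<cdot>\<^sub>m (c1 \<cdot>\<^sub>m 1\<^sub>m n) = (c * c1) \<cdot>\<^sub>m 1\<^sub>m n"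
    by (rule eq_matI) auto
  ultimately show "c \<cdot>\<^sub>m x \<in> {c \<cdot>\<^sub>m 1\<^sub>m n | c::complex. True}" by blast
qed auto

lemma qid_rel: "is_qrel X X (qid X)"
proof (rule qrelI)
  fix a b assume a: "a \<in> At X" and b: "b \<in> At X"
  show "mat_subspace (dm X b) (dm X a) (qid X a b)"
  proof (cases "a = b")
    case True
    show ?thesis unfolding True qid_same[OF b] by (rule scal_subspace)
  next
    case False
    show ?thesis unfolding qid_diff[OF a b False] mat_subspace_def
      by (auto intro!: eq_matI)
  qed
qed (rule qid_off)

lemma qcomp_id_right: assumes R: "is_qrel X Y R" shows "qcomp X X Y R (qid X) = R"
proof (rule qle_antisym)
  show "qle (qcomp X X Y R (qid X)) R"
  proof (rule qcomp_leI[OF R])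
    fix a c b i s assume a: "a \<in> At X" and c: "c \<in> At Y" and b: "b \<in> At X" and i: "i \<in> qid X a b" and s: "s \<in> R b c"
    have sc: "s \<in> carrier_mat (dm Y c) (dm X b)" by (rule qrel_mem(3)[OF R s])
    show "s * i \<in> R a c"
    proof (cases "a = b")
      case True
      then obtain k where "i = k \<cdot>\<^sub>m 1\<^sub>m (dm X b)" using i qid_same[OF a] by auto
      then have "s * i = k \<cdot>\<^sub>m s" using sc by (simp add: mult_smult_distrib[OF sc one_carrier_mat])
      then show ?thesis using qrel_smult[OF R s] True by simp
    next
      case False
      then have "i = 0\<^sub>m (dm X b) (dm X a)" using i qid_diff[OF a b] by auto
      then have "s * i = 0\<^sub>m (dm Y c) (dm X a)" using sc by simp
      then show ?thesis using qrel_zero[OF R a c] by simp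
    qed
  qed
next
  show "qle R (qcomp X X Y R (qid X))" unfolding qle_def
  proof (intro allI subsetI)
    fix a c r assume r: "r \<in> R a c"
    have a: "a \<in> At X" and rc: "r \<in> carrier_mat (dm Y c) (dm X a)" using qrel_mem[OF R r] by auto
    have "1\<^sub>m (dm X a) \<in> qid X a a" unfolding qid_same[OF a]
      by (intro CollectI exI[of _ 1] conjI eq_matI) auto
    then have "r * 1\<^sub>m (dm X a) \<in> qcomp X X Y R (qid X) a c"
      by (rule qcomp_memI[OF qid_rel R _ r])
    then show "r \<in> qcomp X X Y R (qid X) a c" using rc by simp
  qed
qed

lemma qcomp_id_left: assumes R: "is_qrel X Y R" shows "qcomp X Y Y (qid Y) R = R"
proof (rule qle_antisym)
  show "qle (qcomp X Y Y (qid Y) R) R"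
  proof (rule qcomp_leI[OF R])
    fix a c b r i assume a: "a \<in> At X" and c: "c \<in> At Y" and b: "b \<in> At Y" and r: "r \<in> R a b" and i: "i \<in> qid Y b c"
    have rc: "r \<in> carrier_mat (dm Y b) (dm X a)" by (rule qrel_mem(3)[OF R r])
    show "i * r \<in> R a c"
    proof (cases "b = c")
      case True
      then obtain k where "i = k \<cdot>\<^sub>m 1\<^sub>m (dm Y b)" using i qid_same[OF b] by auto
      then have "i * r = k \<cdot>\<^sub>m r" using rc by (simp add: mult_smult_assoc_mat[OF one_carrier_mat rc])
      then show ?thesis using qrel_smult[OF R r] True by simp
    next
      case False
      then have "i = 0\<^sub>m (dm Y c) (dm Y b)" using i qid_diff[OF b c] by auto
      then have "i * r = 0\<^sub>m (dm Y c) (dm X a)" using rc by simp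
      then show ?thesis using qrel_zero[OF R a c] by simp
    qed
  qed
next
  show "qle R (qcomp X Y Y (qid Y) R)" unfolding qle_def
  proof (intro allI subsetI)
    fix a c r assume r: "r \<in> R a c"
    have c: "c \<in> At Y" and rc: "r \<in> carrier_mat (dm Y c) (dm X a)" using qrel_mem[OF R r] by auto
    have "1\<^sub>m (dm Y c) \<in> qid Y c c" unfolding qid_same[OF c]
      by (intro CollectI exI[of _ 1] conjI eq_matI) auto
    then have "1\<^sub>m (dm Y c) * r \<in> qcomp X Y Y (qid Y) R a c"
      by (rule qcomp_memI[OF R qid_rel r])
    then show "r \<in> qcomp X Y Y (qid Y) R a c" using rc by simp
  qed
qed



lemma qadj_apply: "qadj R b a = cadj ` R a b" unfolding qadj_def by simp

lemma qadj_rel: assumes R: "is_qrel X Y R" shows "is_qrel Y X (qadj R)"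
proof (rule qrelI)
  fix b a assume b: "b \<in> At Y" and a: "a \<in> At X"
  have V: "mat_subspace (dm Y b) (dm X a) (R a b)" by (rule qrelD[OF R a b])
  show "mat_subspace (dm X a) (dm Y b) (qadj R b a)" unfolding qadj_apply mat_subspace_def
  proof (intro conjI ballI allI impI)
    show "cadj ` R a b \<subseteq> carrier_mat (dm X a) (dm Y b)" using subspaceD(1)[OF V] by auto
    show "0\<^sub>m (dm X a) (dm Y b) \<in> cadj ` R a b"
      using subspaceD(2)[OF V] by (metis cadj_zero image_eqI)
  next
    fix x y assume "x \<in> cadj ` R a b" "y \<in> cadj ` R a b"
    then obtain x' y' where x: "x = cadj x'" "x' \<in> R a b" and y: "y = cadj y'" "y' \<in> R a b" by blast
    have xc: "x' \<in> carrier_mat (dm Y b) (dm X a)" and yc: "y' \<in> carrier_mat (dm Y b) (dm X a)"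
      using subspaceD(1)[OF V] x y by auto
    have "x + y = cadj (x' + y')" unfolding x y by (rule cadj_add[OF xc yc, symmetric])
    then show "x + y \<in> cadj ` R a b" using subspaceD(3)[OF V x(2) y(2)] by blast
  next
    fix c x assume "x \<in> cadj ` R a b"
    then obtain x' where x: "x = cadj x'" "x' \<in> R a b" by blast
    have "c \<cdot>\<^sub>m x = cadj (cnj c \<cdot>\<^sub>m x')" unfolding x by simp
    then show "c \<cdot>\<^sub>m x \<in> cadj ` R a b" using subspaceD(4)[OF V x(2)] by blast
  qed
next
  fix b a assume "\<not> (b \<in> At Y \<and> a \<in> At X)"
  then show "qadj R b a = {}" unfolding qadj_apply using qrel_off[OF R, of a b] by auto
qed

lemma qadj_qadj[simp]: "qadj (qadj R) = R"
  unfolding qadj_def by (intro ext) (simp add: image_image)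

lemma qadj_mono: "qle R S \<Longrightarrow> qle (qadj R) (qadj S)"
  unfolding qle_def qadj_def by blast

lemma qadj_mem: "r \<in> R a b \<Longrightarrow> cadj r \<in> qadj R b a" unfolding qadj_def by simp

lemma qadj_comp_le: assumes R: "is_qrel X Y R" and S: "is_qrel Y Z S"
  shows "qle (qadj (qcomp X Y Z S R)) (qcomp Z Y X (qadj R) (qadj S))"
  unfolding qle_def
proof (intro allI subsetI)
  have RHS: "is_qrel Z X (qcomp Z Y X (qadj R) (qadj S))"
    by (rule qcomp_rel[OF qadj_rel[OF S] qadj_rel[OF R]])
  fix c a x assume "x \<in> qadj (qcomp X Y Z S R) c a"
  then obtain u where x: "x = cadj u" and u: "u \<in> qcomp X Y Z S R a c" unfolding qadj_apply by blast
  have ac: "a \<in> At X" "c \<in> At Z" using u qcomp_off by fastforce+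
  show "x \<in> qcomp Z Y X (qadj R) (qadj S) c a" unfolding x
  proof (rule qcomp_induct[OF R S qrelD[OF RHS ac(2) ac(1)] u, where f = cadj])
    show "cadj (0\<^sub>m (dm Z c) (dm X a)) \<in> qcomp Z Y X (qadj R) (qadj S) c a"
      using qrel_zero[OF RHS ac(2) ac(1)] by simp
  next
    fix r s b y k assume b: "b \<in> At Y" and r: "r \<in> R a b" and s: "s \<in> S b c"
      and y: "y \<in> carrier_mat (dm Z c) (dm X a)" and yy: "cadj y \<in> qcomp Z Y X (qadj R) (qadj S) c a"
    have rc: "r \<in> carrier_mat (dm Y b) (dm X a)" by (rule qrel_mem(3)[OF R r])
    have sc: "s \<in> carrier_mat (dm Z c) (dm Y b)" by (rule qrel_mem(3)[OF S s])
    have eq: "cadj (k \<cdot>\<^sub>m (s * r) + y) = cnj k \<cdot>\<^sub>m (cadj r * cadj s) + cadj y"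
      using cadj_add[OF smult_carrier_mat[OF mult_carrier_mat[OF sc rc]] y] cadj_mult[OF sc rc] by simp
    have "cadj r * cadj s \<in> qcomp Z Y X (qadj R) (qadj S) c a"
      by (rule qcomp_memI[OF qadj_rel[OF S] qadj_rel[OF R] qadj_mem[of s S b c] qadj_mem[of r R a b]]) (use r s in auto)
    then show "cadj (k \<cdot>\<^sub>m (s * r) + y) \<in> qcomp Z Y X (qadj R) (qadj S) c a"
      unfolding eq by (intro qrel_add[OF RHS] qrel_smult[OF RHS] yy)
  qed
qed

lemma qadj_comp: assumes R: "is_qrel X Y R" and S: "is_qrel Y Z S"
  shows "qadj (qcomp X Y Z S R) = qcomp Z Y X (qadj R) (qadj S)"
proof (rule qle_antisym[OF qadj_comp_le[OF R S]])
  have "qle (qadj (qcomp Z Y X (qadj R) (qadj S))) (qcomp X Y Z (qadj (qadj S)) (qadj (qadj R)))"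
    by (rule qadj_comp_le[OF qadj_rel[OF S] qadj_rel[OF R]])
  then have "qle (qadj (qcomp Z Y X (qadj R) (qadj S))) (qcomp X Y Z S R)" by simp
  from qadj_mono[OF this] show "qle (qcomp Z Y X (qadj R) (qadj S)) (qadj (qcomp X Y Z S R))" by simp
qed

lemma qadj_qid_le: "qle (qadj (qid X)) (qid X)"
  unfolding qle_def
proof (intro allI subsetI)
  fix a a' x assume "x \<in> qadj (qid X) a a'"
  then obtain i where x: "x = cadj i" and i: "i \<in> qid X a' a" unfolding qadj_apply by blast
  have a: "a \<in> At X" and a': "a' \<in> At X" using i qid_off by fastforce+
  show "x \<in> qid X a a'"
  proof (cases "a = a'")
    case True
    then obtain k where "i = k \<cdot>\<^sub>m 1\<^sub>m (dm X a)" using i qid_same[OF a] by auto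
    then have "x = cnj k \<cdot>\<^sub>m 1\<^sub>m (dm X a)" unfolding x by simp
    then show ?thesis unfolding True qid_same[OF a'] using True by blast
  next
    case False
    then have "i = 0\<^sub>m (dm X a) (dm X a')" using i qid_diff[OF a' a] by auto
    then show ?thesis unfolding x qid_diff[OF a a' False] by simp
  qed
qed

lemma qadj_qid[simp]: "qadj (qid X) = qid X"
proof (rule qle_antisym[OF qadj_qid_le])
  show "qle (qid X) (qadj (qid X))" using qadj_mono[OF qadj_qid_le[of X]] by simp
qed

lemma qinf_rel: assumes "is_qrel X Y R" "is_qrel X Y S" shows "is_qrel X Y (qinf R S)"
proof (rule qrelI)
  fix a b assume a: "a \<in> At X" and b: "b \<in> At Y"
  note V = qrelD[OF assms(1) a b] qrelD[OF assms(2) a b]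
  show "mat_subspace (dm Y b) (dm X a) (qinf R S a b)" unfolding qinf_def mat_subspace_def
    using subspaceD[OF V(1)] subspaceD[OF V(2)] by auto
qed (simp add: qinf_def qrel_off[OF assms(1)])

lemma qinf_le1: "qle (qinf R S) R" and qinf_le2: "qle (qinf R S) S"
  unfolding qle_def qinf_def by auto
lemma qinf_greatest: "qle W R \<Longrightarrow> qle W S \<Longrightarrow> qle W (qinf R S)"
  unfolding qle_def qinf_def by auto

lemma inj_cadj: "inj cadj" by (rule injI) (rule cadj_inj)
lemma qadj_qinf: "qadj (qinf R S) = qinf (qadj R) (qadj S)"
  unfolding qadj_def qinf_def by (intro ext) (simp add: image_Int[OF inj_cadj])

lemma qMeet_rel: assumes "\<And>i. i \<in> I \<Longrightarrow> is_qrel X Y (Rs i)" shows "is_qrel X Y (qMeet X Y I Rs)"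
proof (rule qrelI)
  fix a b assume a: "a \<in> At X" and b: "b \<in> At Y"
  show "mat_subspace (dm Y b) (dm X a) (qMeet X Y I Rs a b)" unfolding qMeet_def mat_subspace_def
    using a b subspaceD[OF qrelD[OF assms a b]] by auto
next
  fix a b assume "\<not> (a \<in> At X \<and> b \<in> At Y)"
  then show "qMeet X Y I Rs a b = {}" unfolding qMeet_def by (rule if_not_P)
qed

lemma qMeet_le: "i \<in> I \<Longrightarrow> qle (qMeet X Y I Rs) (Rs i)"
  unfolding qle_def qMeet_def by auto

lemma qMeet_greatest: assumes "is_qrel X Y W" "\<And>i. i \<in> I \<Longrightarrow> qle W (Rs i)"
  shows "qle W (qMeet X Y I Rs)"
  unfolding qle_def qMeet_def
proof (intro allI subsetI)
  fix a b x assume x: "x \<in> W a b"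
  show "x \<in> (if a \<in> At X \<and> b \<in> At Y then carrier_mat (dm Y b) (dm X a) \<inter> (\<Inter>i\<in>I. Rs i a b) else {})"
    using qrel_mem[OF assms(1) x] x assms(2) unfolding qle_def by auto
qed



lemma qle_eq_trans[trans]: "qle a b \<Longrightarrow> b = c \<Longrightarrow> qle a c" by simp
lemma eq_qle_trans[trans]: "a = b \<Longrightarrow> qle b c \<Longrightarrow> qle a c" by simp
declare qle_trans[trans]

lemma qfunD: assumes "qfun X Y F"
  shows "is_qrel X Y F" "qle (qcomp Y X Y F (qadj F)) (qid Y)" "qle (qid X) (qcomp X Y X (qadj F) F)"
  using assms unfolding qfun_def by auto

lemma FdF: assumes F: "qfun X Y F" and W: "is_qrel X Z W"
  shows "qle W (qcomp X Y Z (qcomp Y X Z W (qadj F)) F)"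
proof -
  note Fr = qfunD(1)[OF F]
  have "W = qcomp X X Z W (qid X)" by (rule qcomp_id_right[OF W, symmetric])
  also have "qle \<dots> (qcomp X X Z W (qcomp X Y X (qadj F) F))"
    by (rule qcomp_mono[OF qfunD(3)[OF F] qle_refl])
  also have "qcomp X X Z W (qcomp X Y X (qadj F) F) = qcomp X Y Z (qcomp Y X Z W (qadj F)) F"
    by (rule qcomp_assoc[OF Fr qadj_rel[OF Fr] W, symmetric])
  finally show ?thesis by simp
qed

lemma TFFd: assumes F: "qfun X Y F" and T: "is_qrel Y Z T"
  shows "qle (qcomp Y X Z (qcomp X Y Z T F) (qadj F)) T"
proof -
  note Fr = qfunD(1)[OF F]
  have "qcomp Y X Z (qcomp X Y Z T F) (qadj F) = qcomp Y Y Z T (qcomp Y X Y F (qadj F))"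
    by (rule qcomp_assoc[OF qadj_rel[OF Fr] Fr T])
  also have "qle \<dots> (qcomp Y Y Z T (qid Y))"
    by (rule qcomp_mono[OF qfunD(2)[OF F] qle_refl])
  also have "qcomp Y Y Z T (qid Y) = T" by (rule qcomp_id_right[OF T])
  finally show ?thesis by simp
qed

lemma qfun_eq: assumes F: "qfun X Y F" and G: "qfun X Y G" and le: "qle F G"
  shows "F = G"
proof (rule qle_antisym[OF le])
  note Fr = qfunD(1)[OF F] and Gr = qfunD(1)[OF G]
  have "qle G (qcomp X Y Y (qcomp Y X Y G (qadj F)) F)" by (rule FdF[OF F Gr])
  also have "qle (qcomp X Y Y (qcomp Y X Y G (qadj F)) F) (qcomp X Y Y (qcomp Y X Y G (qadj G)) F)"
    by (rule qcomp_mono[OF qle_refl qcomp_mono[OF qadj_mono[OF le] qle_refl]])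
  also have "qle \<dots> (qcomp X Y Y (qid Y) F)"
    by (rule qcomp_mono[OF qle_refl qfunD(2)[OF G]])
  also have "qcomp X Y Y (qid Y) F = F" by (rule qcomp_id_left[OF Fr])
  finally show "qle G F" .
qed

lemma qfun_comp: assumes F: "qfun X Y F" and G: "qfun Y Z G"
  shows "qfun X Z (qcomp X Y Z G F)"
proof -
  note Fr = qfunD(1)[OF F] and Gr = qfunD(1)[OF G]
  note Fa = qadj_rel[OF Fr] and Ga = qadj_rel[OF Gr]
  have adj: "qadj (qcomp X Y Z G F) = qcomp Z Y X (qadj F) (qadj G)" by (rule qadj_comp[OF Fr Gr])
  have GF: "is_qrel X Z (qcomp X Y Z G F)" by (rule qcomp_rel[OF Fr Gr])
  have FdGd: "is_qrel Z X (qcomp Z Y X (qadj F) (qadj G))" by (rule qcomp_rel[OF Ga Fa])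
  have 1: "qle (qcomp Z X Z (qcomp X Y Z G F) (qadj (qcomp X Y Z G F))) (qid Z)"
  proof -
    have "qcomp Z X Z (qcomp X Y Z G F) (qcomp Z Y X (qadj F) (qadj G))
        = qcomp Z Y Z (qcomp Y X Z (qcomp X Y Z G F) (qadj F)) (qadj G)"
      by (rule qcomp_assoc[OF Ga Fa GF, symmetric])
    also have "qle \<dots> (qcomp Z Y Z G (qadj G))"
      by (rule qcomp_mono[OF qle_refl TFFd[OF F Gr]])
    also have "qle \<dots> (qid Z)" by (rule qfunD(2)[OF G])
    finally show ?thesis unfolding adj .
  qed
  have 2: "qle (qid X) (qcomp X Z X (qadj (qcomp X Y Z G F)) (qcomp X Y Z G F))"
  proof -
    have "qle (qid X) (qcomp X Y X (qadj F) F)" by (rule qfunD(3)[OF F])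
    also have "qcomp X Y X (qadj F) F = qcomp X Y X (qcomp Y Y X (qadj F) (qid Y)) F"
      using qcomp_id_right[OF Fa] by simp
    also have "qle \<dots> (qcomp X Y X (qcomp Y Y X (qadj F) (qcomp Y Z Y (qadj G) G)) F)"
      by (rule qcomp_mono[OF qle_refl qcomp_mono[OF qfunD(3)[OF G] qle_refl]])
    also have "qcomp Y Y X (qadj F) (qcomp Y Z Y (qadj G) G) = qcomp Y Z X (qcomp Z Y X (qadj F) (qadj G)) G"
      by (rule qcomp_assoc[OF Gr Ga Fa, symmetric])
    also have "qcomp X Y X (qcomp Y Z X (qcomp Z Y X (qadj F) (qadj G)) G) F
        = qcomp X Z X (qcomp Z Y X (qadj F) (qadj G)) (qcomp X Y Z G F)"
      by (rule qcomp_assoc[OF Fr Gr FdGd])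
    finally show ?thesis unfolding adj .
  qed
  show ?thesis unfolding qfun_def using GF 1 2 by blast
qed

lemma fun_meet: assumes F: "qfun X Y F" and W: "is_qrel X Z W"
  and Ts: "\<And>i. i \<in> I \<Longrightarrow> is_qrel Y Z (Ts i)"
  and le: "\<And>i. i \<in> I \<Longrightarrow> qle W (qcomp X Y Z (Ts i) F)"
  shows "qle W (qcomp X Y Z (qMeet Y Z I Ts) F)"
proof -
  note Fr = qfunD(1)[OF F]
  have WFd: "is_qrel Y Z (qcomp Y X Z W (qadj F))" by (rule qcomp_rel[OF qadj_rel[OF Fr] W])
  have "qle (qcomp Y X Z W (qadj F)) (qMeet Y Z I Ts)"
  proof (rule qMeet_greatest[OF WFd])
    fix i assume i: "i \<in> I"
    have "qle (qcomp Y X Z W (qadj F)) (qcomp Y X Z (qcomp X Y Z (Ts i) F) (qadj F))"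
      by (rule qcomp_mono[OF qle_refl le[OF i]])
    also have "qle \<dots> (Ts i)" by (rule TFFd[OF F Ts[OF i]])
    finally show "qle (qcomp Y X Z W (qadj F)) (Ts i)" .
  qed
  then have "qle (qcomp X Y Z (qcomp Y X Z W (qadj F)) F) (qcomp X Y Z (qMeet Y Z I Ts) F)"
    by (rule qcomp_mono[OF qle_refl])
  with FdF[OF F W] show ?thesis by (rule qle_trans)
qed

lemma fun_inf: assumes F: "qfun X Y F" and W: "is_qrel X Z W"
  and U: "is_qrel Y Z U" and V: "is_qrel Y Z V"
  and le1: "qle W (qcomp X Y Z U F)" and le2: "qle W (qcomp X Y Z V F)"
  shows "qle W (qcomp X Y Z (qinf U V) F)"
proof -
  note Fr = qfunD(1)[OF F]
  have "qle (qcomp Y X Z W (qadj F)) (qinf U V)"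
  proof (rule qinf_greatest)
    show "qle (qcomp Y X Z W (qadj F)) U"
      using qle_trans[OF qcomp_mono[OF qle_refl le1] TFFd[OF F U]] .
    show "qle (qcomp Y X Z W (qadj F)) V"
      using qle_trans[OF qcomp_mono[OF qle_refl le2] TFFd[OF F V]] .
  qed
  then have "qle (qcomp X Y Z (qcomp Y X Z W (qadj F)) F) (qcomp X Y Z (qinf U V) F)"
    by (rule qcomp_mono[OF qle_refl])
  with FdF[OF F W] show ?thesis by (rule qle_trans)
qed



definition tr :: "complex mat \<Rightarrow> complex" where "tr M = (\<Sum>k<dim_row M. M $$ (k,k))"

lemma tr_comm: assumes A: "A \<in> carrier_mat n m" and B: "B \<in> carrier_mat m n"
  shows "tr (A * B) = tr (B * A)"
proof -
  have "tr (A * B) = (\<Sum>k<n. \<Sum>l<m. A $$ (k,l) * B $$ (l,k))"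
    unfolding tr_def using A B by (simp add: scalar_prod_def atLeast0LessThan)
  also have "\<dots> = (\<Sum>l<m. \<Sum>k<n. B $$ (l,k) * A $$ (k,l))"
    by (subst sum.swap) (simp add: mult.commute)
  also have "\<dots> = tr (B * A)"
    unfolding tr_def using A B by (simp add: scalar_prod_def atLeast0LessThan)
  finally show ?thesis .
qed

lemma upper_tri_mult: assumes X: "X \<in> carrier_mat n n" and Y: "Y \<in> carrier_mat n n"
  and ux: "upper_triangular X" and uy: "upper_triangular Y"
  shows "upper_triangular (X * Y)" "\<And>k. k < n \<Longrightarrow> (X * Y) $$ (k,k) = X $$ (k,k) * Y $$ (k,k)"
proof -
  show "upper_triangular (X * Y)"
  proof (rule upper_triangularI)
    fix i j assume ji: "j < i" and i: "i < dim_row (X * Y)"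
    have "(X * Y) $$ (i,j) = (\<Sum>l<n. X $$ (i,l) * Y $$ (l,j))"
      using X Y ji i by (simp add: scalar_prod_def atLeast0LessThan)
    also have "\<dots> = 0"
    proof (rule sum.neutral, intro ballI)
      fix l assume l: "l \<in> {..<n}"
      show "X $$ (i,l) * Y $$ (l,j) = 0"
      proof (cases "l < i")
        case True then show ?thesis using upper_triangularD[OF ux True] i X by simp
      next
        case False then have "j < l" using ji by simp
        then show ?thesis using upper_triangularD[OF uy] l Y by simp
      qed
    qed
    finally show "(X * Y) $$ (i,j) = 0" .
  qed
next
  fix k assume k: "k < n"
  have e1: "(X * Y) $$ (k,k) = (\<Sum>l<n. X $$ (k,l) * Y $$ (l,k))"
    using X Y k by (simp add: scalar_prod_def atLeast0LessThan)
  have z: "\<forall>l\<in>{..<n} - {k}. X $$ (k,l) * Y $$ (l,k) = 0"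
  proof
    fix l assume l: "l \<in> {..<n} - {k}"
    show "X $$ (k,l) * Y $$ (l,k) = 0"
    proof (cases "l < k")
      case True then show ?thesis using upper_triangularD[OF ux True] k X by simp
    next
      case False then have "k < l" using l by simp
      then show ?thesis using upper_triangularD[OF uy] l Y by simp
    qed
  qed
  have "(X * Y) $$ (k,k) = (\<Sum>l\<in>{k}. X $$ (k,l) * Y $$ (l,k))" unfolding e1
    by (rule sum.mono_neutral_right) (use k z in auto)
  also have "\<dots> = X $$ (k,k) * Y $$ (k,k)" by simp
  finally show "(X * Y) $$ (k,k) = X $$ (k,k) * Y $$ (k,k)" .
qed

lemma herm_sq_zero: assumes Z: "Z \<in> carrier_mat n n" and h: "cadj Z = Z" and t: "tr (Z * Z) = 0"
  shows "Z = 0\<^sub>m n n"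
proof -
  have Zij: "\<And>i j. i < n \<Longrightarrow> j < n \<Longrightarrow> Z $$ (j,i) = cnj (Z $$ (i,j))"
  proof -
    fix i j assume "i < n" "j < n"
    then have "cadj Z $$ (j,i) = cnj (Z $$ (i,j))" using Z by simp
    then show "Z $$ (j,i) = cnj (Z $$ (i,j))" using h by simp
  qed
  have "tr (Z * Z) = (\<Sum>i<n. \<Sum>j<n. Z $$ (i,j) * Z $$ (j,i))"
    unfolding tr_def using Z by (simp add: scalar_prod_def atLeast0LessThan)
  also have "\<dots> = (\<Sum>i<n. \<Sum>j<n. complex_of_real ((cmod (Z $$ (i,j)))\<^sup>2))"
  proof (intro sum.cong refl)
    fix i j assume "i \<in> {..<n}" "j \<in> {..<n}"
    then have "Z $$ (j,i) = cnj (Z $$ (i,j))" using Zij by blast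
    then show "Z $$ (i,j) * Z $$ (j,i) = complex_of_real ((cmod (Z $$ (i,j)))\<^sup>2)"
      using complex_norm_square[of "Z $$ (i,j)"] by simp
  qed
  also have "\<dots> = complex_of_real (\<Sum>i<n. \<Sum>j<n. (cmod (Z $$ (i,j)))\<^sup>2)" by (simp only: of_real_sum)
  finally have "complex_of_real (\<Sum>i<n. \<Sum>j<n. (cmod (Z $$ (i,j)))\<^sup>2) = 0" using t by simp
  then have "(\<Sum>i<n. \<Sum>j<n. (cmod (Z $$ (i,j)))\<^sup>2) = 0" by (simp only: of_real_eq_0_iff)
  then have "\<forall>i\<in>{..<n}. (\<Sum>j<n. (cmod (Z $$ (i,j)))\<^sup>2) = 0"
    by (subst (asm) sum_nonneg_eq_0_iff) (auto intro: sum_nonneg)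
  then have "\<forall>i<n. \<forall>j<n. (cmod (Z $$ (i,j)))\<^sup>2 = 0"
    by (auto simp: sum_nonneg_eq_0_iff)
  then show ?thesis using Z by (intro eq_matI) auto
qed

lemma eigen_real: fixes a :: "complex mat"
  assumes a: "a \<in> carrier_mat n n" and h: "cadj a = a" and ev: "eigenvalue a e"
  shows "cnj e = e"
proof -
  obtain v where v: "eigenvector a v e" using ev unfolding eigenvalue_def by blast
  have vc: "v \<in> carrier_vec n" and v0: "v \<noteq> 0\<^sub>v n" and av: "a *\<^sub>v v = e \<cdot>\<^sub>v v"
    using v a unfolding eigenvector_def by auto
  have aij: "\<And>i j. i < n \<Longrightarrow> j < n \<Longrightarrow> a $$ (j,i) = cnj (a $$ (i,j))"
  proof -
    fix i j assume "i < n" "j < n"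
    then have "cadj a $$ (j,i) = cnj (a $$ (i,j))" using a by simp
    then show "a $$ (j,i) = cnj (a $$ (i,j))" using h by simp
  qed
  define s where "s = (\<Sum>i<n. cnj (v $ i) * (a *\<^sub>v v) $ i)"
  have s1: "s = (\<Sum>i<n. \<Sum>j<n. cnj (v $ i) * a $$ (i,j) * v $ j)"
    unfolding s_def using a vc by (simp add: scalar_prod_def atLeast0LessThan sum_distrib_left mult.assoc)
  have "cnj s = (\<Sum>i<n. \<Sum>j<n. v $ i * cnj (a $$ (i,j)) * cnj (v $ j))"
    unfolding s1 by simp
  also have "\<dots> = (\<Sum>i<n. \<Sum>j<n. v $ i * a $$ (j,i) * cnj (v $ j))"
  proof (intro sum.cong refl)
    fix i j assume "i \<in> {..<n}" "j \<in> {..<n}"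
    then have "a $$ (j,i) = cnj (a $$ (i,j))" using aij by blast
    then show "v $ i * cnj (a $$ (i,j)) * cnj (v $ j) = v $ i * a $$ (j,i) * cnj (v $ j)" by simp
  qed
  also have "\<dots> = (\<Sum>j<n. \<Sum>i<n. cnj (v $ j) * a $$ (j,i) * v $ i)"
    by (subst sum.swap) (simp add: ac_simps)
  also have "\<dots> = s" unfolding s1 by simp
  finally have cs: "cnj s = s" .
  define N where "N = (\<Sum>i<n. (cmod (v $ i))\<^sup>2)"
  have "s = (\<Sum>i<n. e * complex_of_real ((cmod (v $ i))\<^sup>2))"
    unfolding s_def av
  proof (intro sum.cong refl)
    fix i assume "i \<in> {..<n}"
    then have "(e \<cdot>\<^sub>v v) $ i = e * v $ i" using vc by simp
    then show "cnj (v $ i) * (e \<cdot>\<^sub>v v) $ i = e * complex_of_real ((cmod (v $ i))\<^sup>2)"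
      using complex_norm_square[of "v $ i"] by (simp add: ac_simps)
  qed
  then have s2: "s = e * complex_of_real N" unfolding N_def by (simp add: sum_distrib_left)
  have "N \<noteq> 0"
  proof
    assume "N = 0"
    then have "\<forall>i<n. (cmod (v $ i))\<^sup>2 = 0" unfolding N_def by (auto simp: sum_nonneg_eq_0_iff)
    then have "v = 0\<^sub>v n" using vc by (intro eq_vecI) auto
    with v0 show False by simp
  qed
  have "cnj e * complex_of_real N = e * complex_of_real N" using cs unfolding s2 by simp
  then show ?thesis using \<open>N \<noteq> 0\<close> by simp
qed



fun pl :: "complex mat \<Rightarrow> nat \<Rightarrow> complex list \<Rightarrow> complex mat" where
  "pl a n [] = 1\<^sub>m n"
| "pl a n (l # ls) = (a - l \<cdot>\<^sub>m 1\<^sub>m n) * pl a n ls"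

lemma sc_carrier: "l \<cdot>\<^sub>m 1\<^sub>m n \<in> carrier_mat n n" by simp

lemma pl_carrier: "a \<in> carrier_mat n n \<Longrightarrow> pl a n ls \<in> carrier_mat n n"
  by (induct ls) (auto intro!: mult_carrier_mat minus_carrier_mat)

lemma minus_sc: fixes a :: "complex mat" assumes "a \<in> carrier_mat n n"
  shows "a - l \<cdot>\<^sub>m 1\<^sub>m n = a + (- l) \<cdot>\<^sub>m 1\<^sub>m n"
  using assms by (intro eq_matI) auto

lemma left_sc: fixes X :: "complex mat" assumes "X \<in> carrier_mat n m"
  shows "(l \<cdot>\<^sub>m 1\<^sub>m n) * X = l \<cdot>\<^sub>m X"
  using mult_smult_assoc_mat[OF one_carrier_mat assms] assms by simp

lemma right_sc: fixes X :: "complex mat" assumes "X \<in> carrier_mat m n"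
  shows "X * (l \<cdot>\<^sub>m 1\<^sub>m n) = l \<cdot>\<^sub>m X"
  using mult_smult_distrib[OF assms one_carrier_mat] assms by simp

lemma comm_shift: fixes a M :: "complex mat" assumes a: "a \<in> carrier_mat n n" and M: "M \<in> carrier_mat n n"
  and c: "a * M = M * a"
  shows "(a - l \<cdot>\<^sub>m 1\<^sub>m n) * M = M * (a - l \<cdot>\<^sub>m 1\<^sub>m n)"
proof -
  have "(a - l \<cdot>\<^sub>m 1\<^sub>m n) * M = a * M - (l \<cdot>\<^sub>m 1\<^sub>m n) * M"
    by (rule minus_mult_distrib_mat[OF a sc_carrier M])
  also have "\<dots> = a * M - l \<cdot>\<^sub>m M" using left_sc[OF M] by simp
  also have "\<dots> = M * a - M * (l \<cdot>\<^sub>m 1\<^sub>m n)" using right_sc[OF M] c by simp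
  also have "\<dots> = M * (a - l \<cdot>\<^sub>m 1\<^sub>m n)"
    by (rule mult_minus_distrib_mat[OF M a sc_carrier, symmetric])
  finally show ?thesis .
qed

lemma pl_comm: fixes a :: "complex mat" assumes a: "a \<in> carrier_mat n n"
  shows "a * pl a n ls = pl a n ls * a"
proof (induct ls)
  case Nil then show ?case using a by simp
next
  case (Cons l ls)
  have M: "pl a n ls \<in> carrier_mat n n" by (rule pl_carrier[OF a])
  have L: "a - l \<cdot>\<^sub>m 1\<^sub>m n \<in> carrier_mat n n" using a by (simp add: minus_carrier_mat)
  have aL: "a * (a - l \<cdot>\<^sub>m 1\<^sub>m n) = (a - l \<cdot>\<^sub>m 1\<^sub>m n) * a"
    using comm_shift[OF a a refl] by simp
  have "a * pl a n (l # ls) = (a * (a - l \<cdot>\<^sub>m 1\<^sub>m n)) * pl a n ls"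
    using assoc_mult_mat[OF a L M] by simp
  also have "\<dots> = (a - l \<cdot>\<^sub>m 1\<^sub>m n) * (a * pl a n ls)"
    unfolding aL using assoc_mult_mat[OF L a M] by simp
  also have "\<dots> = ((a - l \<cdot>\<^sub>m 1\<^sub>m n) * pl a n ls) * a"
    unfolding Cons using assoc_mult_mat[OF L M a] by simp
  finally show ?case by simp
qed

lemma cadj_minus_sc: fixes a :: "complex mat" assumes a: "a \<in> carrier_mat n n" and h: "cadj a = a"
  and l: "cnj l = l"
  shows "cadj (a - l \<cdot>\<^sub>m 1\<^sub>m n) = a - l \<cdot>\<^sub>m 1\<^sub>m n"
  using cadj_minus[OF a sc_carrier] h l by simp

lemma pl_herm: fixes a :: "complex mat" assumes a: "a \<in> carrier_mat n n" and h: "cadj a = a"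
  and r: "\<forall>l\<in>set ls. cnj l = l"
  shows "cadj (pl a n ls) = pl a n ls"
  using r
proof (induct ls)
  case Nil then show ?case by simp
next
  case (Cons l ls)
  have M: "pl a n ls \<in> carrier_mat n n" by (rule pl_carrier[OF a])
  have L: "a - l \<cdot>\<^sub>m 1\<^sub>m n \<in> carrier_mat n n" using a by (simp add: minus_carrier_mat)
  have "cadj (pl a n (l # ls)) = cadj (pl a n ls) * cadj (a - l \<cdot>\<^sub>m 1\<^sub>m n)"
    using cadj_mult[OF L M] by simp
  also have "\<dots> = pl a n ls * (a - l \<cdot>\<^sub>m 1\<^sub>m n)"
    using Cons cadj_minus_sc[OF a h] by simp
  also have "\<dots> = (a - l \<cdot>\<^sub>m 1\<^sub>m n) * pl a n ls"
    by (rule comm_shift[OF a M pl_comm[OF a], symmetric])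
  finally show ?case by simp
qed

lemma pl_A: fixes a :: "complex mat" assumes a: "a \<in> carrier_mat n n"
  and A: "a \<in> A" "1\<^sub>m n \<in> A" "\<forall>x\<in>A. \<forall>y\<in>A. x * y \<in> A" "\<forall>x\<in>A. \<forall>y\<in>A. x + y \<in> A"
    "\<forall>c. \<forall>x\<in>A. c \<cdot>\<^sub>m x \<in> A"
  shows "pl a n ls \<in> A"
proof (induct ls)
  case Nil then show ?case using A by simp
next
  case (Cons l ls)
  have "a - l \<cdot>\<^sub>m 1\<^sub>m n \<in> A" unfolding minus_sc[OF a] using A by blast
  then show ?case using Cons A by simp
qed

lemma sandwich: fixes P Q X Y :: "complex mat"
  assumes P: "P \<in> carrier_mat n n" and Q: "Q \<in> carrier_mat n n" and X: "X \<in> carrier_mat n n"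
    and Y: "Y \<in> carrier_mat n n" and QP: "Q * P = 1\<^sub>m n"
  shows "(P * X * Q) * (P * Y * Q) = P * (X * Y) * Q"
proof -
  have "(P * X * Q) * (P * Y * Q) = P * X * (Q * (P * Y * Q))"
    using assoc_mult_mat[of "P * X" n n Q n "P * Y * Q" n] P X Q Y by simp
  also have "Q * (P * Y * Q) = (Q * P) * Y * Q"
    using P Q Y by (simp add: assoc_mult_mat[of _ n n _ n _ n])
  also have "\<dots> = Y * Q" using QP Y by simp
  also have "P * X * (Y * Q) = P * (X * Y) * Q"
    using P X Y Q by (simp add: assoc_mult_mat[of _ n n _ n _ n])
  finally show ?thesis .
qed

lemma pl_sim: fixes a B P Q :: "complex mat"
  assumes a: "a \<in> carrier_mat n n" and B: "B \<in> carrier_mat n n" and P: "P \<in> carrier_mat n n"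
    and Q: "Q \<in> carrier_mat n n" and PQ: "P * Q = 1\<^sub>m n" and QP: "Q * P = 1\<^sub>m n" and aB: "a = P * B * Q"
  shows "pl a n ls = P * pl B n ls * Q"
proof (induct ls)
  case Nil then show ?case using P PQ by simp
next
  case (Cons l ls)
  have MB: "pl B n ls \<in> carrier_mat n n" by (rule pl_carrier[OF B])
  have LB: "B - l \<cdot>\<^sub>m 1\<^sub>m n \<in> carrier_mat n n" using B by (simp add: minus_carrier_mat)
  have "P * (B - l \<cdot>\<^sub>m 1\<^sub>m n) * Q = (P * B - P * (l \<cdot>\<^sub>m 1\<^sub>m n)) * Q"
    using mult_minus_distrib_mat[OF P B sc_carrier] by simp
  also have "\<dots> = P * B * Q - P * (l \<cdot>\<^sub>m 1\<^sub>m n) * Q"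
    using minus_mult_distrib_mat[of "P * B" n n "P * (l \<cdot>\<^sub>m 1\<^sub>m n)" Q n] P B Q by simp
  also have "P * (l \<cdot>\<^sub>m 1\<^sub>m n) * Q = l \<cdot>\<^sub>m 1\<^sub>m n"
    using right_sc[OF P] mult_smult_assoc_mat[OF P Q] PQ by simp
  finally have L: "a - l \<cdot>\<^sub>m 1\<^sub>m n = P * (B - l \<cdot>\<^sub>m 1\<^sub>m n) * Q" using aB by simp
  show ?case unfolding pl.simps L Cons by (rule sandwich[OF P Q LB MB QP])
qed

lemma minus_sc_upper: fixes B :: "complex mat" assumes B: "B \<in> carrier_mat n n" and u: "upper_triangular B"
  shows "upper_triangular (B - l \<cdot>\<^sub>m 1\<^sub>m n)" "\<And>k. k < n \<Longrightarrow> (B - l \<cdot>\<^sub>m 1\<^sub>m n) $$ (k,k) = B $$ (k,k) - l"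
  using B upper_triangularD[OF u] by (auto intro!: upper_triangularI)

lemma pl_upper: fixes B :: "complex mat" assumes B: "B \<in> carrier_mat n n" and u: "upper_triangular B"
  shows "upper_triangular (pl B n ls) \<and> (\<forall>k<n. pl B n ls $$ (k,k) = prod_list (map (\<lambda>l. B $$ (k,k) - l) ls))"
proof (induct ls)
  case Nil then show ?case by simp
next
  case (Cons l ls)
  have MB: "pl B n ls \<in> carrier_mat n n" by (rule pl_carrier[OF B])
  have LB: "B - l \<cdot>\<^sub>m 1\<^sub>m n \<in> carrier_mat n n" using B by (simp add: minus_carrier_mat)
  note U = upper_tri_mult[OF LB MB minus_sc_upper(1)[OF B u] conjunct1[OF Cons]]
  show ?case using U Cons minus_sc_upper(2)[OF B u] by simp
qed

lemma pl_eig: fixes a X :: "complex mat" assumes a: "a \<in> carrier_mat n n" and X: "X \<in> carrier_mat n m"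
  and aX: "a * X = \<mu> \<cdot>\<^sub>m X"
  shows "pl a n ls * X = prod_list (map (\<lambda>l. \<mu> - l) ls) \<cdot>\<^sub>m X"
proof (induct ls)
  case Nil
  have "1\<^sub>m n * X = X" using X by simp
  also have "X = 1 \<cdot>\<^sub>m X" using X by (intro eq_matI) auto
  finally show ?case by simp
next
  case (Cons l ls)
  have M: "pl a n ls \<in> carrier_mat n n" by (rule pl_carrier[OF a])
  have L: "a - l \<cdot>\<^sub>m 1\<^sub>m n \<in> carrier_mat n n" using a by (simp add: minus_carrier_mat)
  define c where "c = prod_list (map (\<lambda>l. \<mu> - l) ls)"
  have "(a - l \<cdot>\<^sub>m 1\<^sub>m n) * X = a * X - (l \<cdot>\<^sub>m 1\<^sub>m n) * X"
    by (rule minus_mult_distrib_mat[OF a sc_carrier X])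
  also have "\<dots> = (\<mu> - l) \<cdot>\<^sub>m X" unfolding aX left_sc[OF X] using X by (intro eq_matI) (auto simp: algebra_simps)
  finally have LX: "(a - l \<cdot>\<^sub>m 1\<^sub>m n) * X = (\<mu> - l) \<cdot>\<^sub>m X" .
  have "pl a n (l # ls) * X = (a - l \<cdot>\<^sub>m 1\<^sub>m n) * (pl a n ls * X)"
    using assoc_mult_mat[OF L M X] by simp
  also have "\<dots> = (a - l \<cdot>\<^sub>m 1\<^sub>m n) * (c \<cdot>\<^sub>m X)" unfolding Cons c_def ..
  also have "\<dots> = c \<cdot>\<^sub>m ((\<mu> - l) \<cdot>\<^sub>m X)" using mult_smult_distrib[OF L X] LX by simp
  also have "\<dots> = ((\<mu> - l) * c) \<cdot>\<^sub>m X" using X by (intro eq_matI) auto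
  finally show ?case unfolding c_def by simp
qed



lemma cnj_prod_real: "\<forall>l\<in>set ls. cnj l = l \<Longrightarrow> cnj \<mu> = \<mu> \<Longrightarrow>
  cnj (prod_list (map (\<lambda>l. \<mu> - l) ls)) = prod_list (map (\<lambda>l. \<mu> - l) ls)"
  by (induct ls) auto

lemma unsandwich: fixes P Q M :: "complex mat"
  assumes P: "P \<in> carrier_mat n n" and Q: "Q \<in> carrier_mat n n" and M: "M \<in> carrier_mat n n"
    and QP: "Q * P = 1\<^sub>m n"
  shows "Q * (P * M * Q) * P = M"
proof -
  have "Q * (P * M * Q) * P = (Q * P) * M * (Q * P)"
    using P Q M by (simp add: assoc_mult_mat[of _ n n _ n _ n])
  then show ?thesis using QP M by simp
qed

lemma minus_zero_eq: fixes X Y :: "complex mat" assumes "X \<in> carrier_mat n m" "Y \<in> carrier_mat n m"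
  and "X - Y = 0\<^sub>m n m" shows "X = Y"
proof (rule eq_matI)
  fix i j assume i: "i < dim_row Y" and j: "j < dim_col Y"
  have "(X - Y) $$ (i,j) = X $$ (i,j) - Y $$ (i,j)" using i j assms(1,2) by simp
  moreover have "(X - Y) $$ (i,j) = 0" by (subst assms(3)) (use i j assms(2) in simp)
  ultimately show "X $$ (i,j) = Y $$ (i,j)" by simp
qed (use assms in auto)

lemma herm_proj: fixes a :: "complex mat"
  assumes a: "a \<in> carrier_mat n n" and h: "cadj a = a" and ns: "\<forall>c. a \<noteq> c \<cdot>\<^sub>m 1\<^sub>m n"
  and A: "a \<in> A" "1\<^sub>m n \<in> A" "\<forall>x\<in>A. \<forall>y\<in>A. x * y \<in> A" "\<forall>x\<in>A. \<forall>y\<in>A. x + y \<in> A"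
    "\<forall>c. \<forall>x\<in>A. c \<cdot>\<^sub>m x \<in> A"
  shows "\<exists>p\<in>A. p * p = p \<and> cadj p = p \<and> p \<noteq> 0\<^sub>m n n \<and> p \<noteq> 1\<^sub>m n"
proof -
  have n0: "n \<noteq> 0"
  proof
    assume "n = 0"
    then have "a = 0 \<cdot>\<^sub>m 1\<^sub>m n" using a by (intro eq_matI) auto
    with ns show False by blast
  qed
  obtain es where cp: "char_poly a = (\<Prod>e\<leftarrow>es. [:- e, 1:])" and les: "length es = n"
    using char_poly_factorized[OF a] by blast
  obtain B P Q where sd: "schur_decomposition a es = (B,P,Q)" by (cases "schur_decomposition a es") auto
  have sch: "similar_mat_wit a B P Q \<and> upper_triangular B \<and> diag_mat B = es"
    by (rule schur_decomposition[OF a cp sd])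
  have dr: "dim_row a = n" using a by simp
  have B: "B \<in> carrier_mat n n" and P: "P \<in> carrier_mat n n" and Q: "Q \<in> carrier_mat n n"
    and PQ: "P * Q = 1\<^sub>m n" and QP: "Q * P = 1\<^sub>m n" and aPBQ: "a = P * B * Q"
    using sch unfolding similar_mat_wit_def Let_def dr by auto
  have uB: "upper_triangular B" using sch by simp
  have diagB: "\<And>k. k < n \<Longrightarrow> B $$ (k,k) = es ! k"
  proof -
    fix k assume k: "k < n"
    have "diag_mat B ! k = B $$ (k,k)" unfolding diag_mat_def using B k by simp
    then show "B $$ (k,k) = es ! k" using sch by simp
  qed
  have real: "\<forall>e\<in>set es. cnj e = e"
  proof
    fix e assume e: "e \<in> set es"
    have "poly (char_poly a) e = (\<Prod>x\<leftarrow>es. poly [:- x, 1:] e)"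
      unfolding cp by (simp add: poly_prod_list o_def)
    also have "\<dots> = 0" unfolding prod_list_zero_iff using e by force
    finally have "eigenvalue a e" using eigenvalue_root_char_poly[OF a] by simp
    then show "cnj e = e" by (rule eigen_real[OF a h])
  qed
  define l1 where "l1 = es ! 0"
  have l1es: "l1 \<in> set es" unfolding l1_def using les n0 by simp
  have l1B: "B $$ (0,0) = l1" unfolding l1_def using diagB n0 by simp
  define L' where "L' = filter (\<lambda>l. l \<noteq> l1) es"
  define L where "L = l1 # L'"
  have realL: "\<forall>l\<in>set L. cnj l = l" unfolding L_def L'_def using real l1es by auto
  have realL': "\<forall>l\<in>set L'. cnj l = l" unfolding L'_def using real by auto
  define Z where "Z = pl a n L"
  define N where "N = pl B n L"
  have Zc: "Z \<in> carrier_mat n n" unfolding Z_def by (rule pl_carrier[OF a])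
  have Nc: "N \<in> carrier_mat n n" unfolding N_def by (rule pl_carrier[OF B])
  have ZN: "Z = P * N * Q" unfolding Z_def N_def by (rule pl_sim[OF a B P Q PQ QP aPBQ])
  have Nu: "upper_triangular N" and Nd: "\<forall>k<n. N $$ (k,k) = prod_list (map (\<lambda>l. B $$ (k,k) - l) L)"
    using pl_upper[OF B uB, of L] unfolding N_def by auto
  have Nd0: "\<And>k. k < n \<Longrightarrow> N $$ (k,k) = 0"
  proof -
    fix k assume k: "k < n"
    have "B $$ (k,k) \<in> set L" unfolding diagB[OF k] L_def L'_def using k les by auto
    then have "0 \<in> set (map (\<lambda>l. B $$ (k,k) - l) L)" by force
    then show "N $$ (k,k) = 0" using Nd k by (simp add: prod_list_zero_iff)
  qed
  have NN: "N * N \<in> carrier_mat n n" using Nc by simp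
  have "tr (Z * Z) = tr (P * (N * N) * Q)" unfolding ZN by (simp add: sandwich[OF P Q Nc Nc QP])
  also have "\<dots> = tr (Q * (P * (N * N)))" by (rule tr_comm[OF mult_carrier_mat[OF P NN] Q])
  also have "Q * (P * (N * N)) = N * N" using assoc_mult_mat[OF Q P NN, symmetric] QP left_mult_one_mat[OF NN] by simp
  also have "tr (N * N) = (\<Sum>k<n. N $$ (k,k) * N $$ (k,k))"
    unfolding tr_def using upper_tri_mult(2)[OF Nc Nc Nu Nu] Nc by simp
  also have "\<dots> = 0" using Nd0 by simp
  finally have "tr (Z * Z) = 0" .
  moreover have "cadj Z = Z" unfolding Z_def by (rule pl_herm[OF a h realL])
  ultimately have Z0: "Z = 0\<^sub>m n n" using herm_sq_zero[OF Zc] by blast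
  define p0 where "p0 = pl a n L'"
  have p0c: "p0 \<in> carrier_mat n n" unfolding p0_def by (rule pl_carrier[OF a])
  have "a * p0 - l1 \<cdot>\<^sub>m p0 = (a - l1 \<cdot>\<^sub>m 1\<^sub>m n) * p0"
    using minus_mult_distrib_mat[OF a sc_carrier p0c] left_sc[OF p0c] by simp
  also have "\<dots> = 0\<^sub>m n n" using Z0 unfolding Z_def L_def p0_def by simp
  finally have ap0: "a * p0 = l1 \<cdot>\<^sub>m p0"
    by (rule minus_zero_eq[OF mult_carrier_mat[OF a p0c] smult_carrier_mat[OF p0c]])
  define c where "c = prod_list (map (\<lambda>l. l1 - l) L')"
  have c0: "c \<noteq> 0" unfolding c_def prod_list_zero_iff L'_def by auto
  have cr: "cnj c = c" unfolding c_def by (rule cnj_prod_real[OF realL']) (use real l1es in auto)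
  have p0p0: "p0 * p0 = c \<cdot>\<^sub>m p0" unfolding c_def using pl_eig[OF a p0c ap0, of L'] p0_def by simp
  define p where "p = (1 / c) \<cdot>\<^sub>m p0"
  have pc: "p \<in> carrier_mat n n" unfolding p_def using p0c by simp
  have e1: "p * p = (1 / c) \<cdot>\<^sub>m (p0 * ((1 / c) \<cdot>\<^sub>m p0))"
    unfolding p_def by (rule mult_smult_assoc_mat[OF p0c smult_carrier_mat[OF p0c]])
  have e2: "p0 * ((1 / c) \<cdot>\<^sub>m p0) = (1 / c) \<cdot>\<^sub>m (p0 * p0)" by (rule mult_smult_distrib[OF p0c p0c])
  have "p * p = (1 / c) \<cdot>\<^sub>m ((1 / c) \<cdot>\<^sub>m (p0 * p0))" using e1 e2 by simp
  also have "\<dots> = p" unfolding p0p0 p_def using p0c c0 by (intro eq_matI) auto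
  finally have pp: "p * p = p" .
  have ph: "cadj p = p" unfolding p_def
    using pl_herm[OF a h realL'] cr unfolding p0_def by simp
  have pA: "p \<in> A" unfolding p_def p0_def using pl_A[OF a A] A(5) by blast
  have p0cp: "p0 = c \<cdot>\<^sub>m p" unfolding p_def using p0c c0 by (intro eq_matI) auto
  have pn0: "p \<noteq> 0\<^sub>m n n"
  proof
    assume "p = 0\<^sub>m n n"
    then have "p0 = 0\<^sub>m n n" using p0cp by simp
    have M: "pl B n L' \<in> carrier_mat n n" by (rule pl_carrier[OF B])
    have "pl B n L' = Q * p0 * P" unfolding p0_def pl_sim[OF a B P Q PQ QP aPBQ, of L']
      by (rule unsandwich[OF P Q M QP, symmetric])
    also have "\<dots> = 0\<^sub>m n n" using \<open>p0 = 0\<^sub>m n n\<close> P Q by simp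
    finally have "pl B n L' $$ (0,0) = 0" using n0 by simp
    moreover have "pl B n L' $$ (0,0) = c" using pl_upper[OF B uB, of L'] n0 l1B unfolding c_def by simp
    ultimately show False using c0 by simp
  qed
  have pn1: "p \<noteq> 1\<^sub>m n"
  proof
    assume p1: "p = 1\<^sub>m n"
    from p0cp have p0e: "p0 = c \<cdot>\<^sub>m 1\<^sub>m n" using p1 by simp
    have "c \<cdot>\<^sub>m a = l1 \<cdot>\<^sub>m (c \<cdot>\<^sub>m 1\<^sub>m n)" using ap0 unfolding p0e right_sc[OF a] .
    then have "a = l1 \<cdot>\<^sub>m 1\<^sub>m n"
    proof -
      assume eq: "c \<cdot>\<^sub>m a = l1 \<cdot>\<^sub>m (c \<cdot>\<^sub>m 1\<^sub>m n)"
      show "a = l1 \<cdot>\<^sub>m 1\<^sub>m n"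
      proof (rule eq_matI)
        fix i j assume i: "i < dim_row (l1 \<cdot>\<^sub>m 1\<^sub>m n)" and j: "j < dim_col (l1 \<cdot>\<^sub>m 1\<^sub>m n)"
        have "(c \<cdot>\<^sub>m a) $$ (i,j) = (l1 \<cdot>\<^sub>m (c \<cdot>\<^sub>m 1\<^sub>m n)) $$ (i,j)" using eq by simp
        then have "c * a $$ (i,j) = c * (l1 \<cdot>\<^sub>m 1\<^sub>m n) $$ (i,j)" using i j a by simp
        then show "a $$ (i,j) = (l1 \<cdot>\<^sub>m 1\<^sub>m n) $$ (i,j)" using c0 by simp
      qed (use a in auto)
    qed
    with ns show False by blast
  qed
  show ?thesis using pA pp ph pn0 pn1 by blast
qed



lemma herm_parts: fixes m :: "complex mat" assumes mc: "m \<in> carrier_mat n n"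
  shows "cadj ((1/2) \<cdot>\<^sub>m (m + cadj m)) = (1/2) \<cdot>\<^sub>m (m + cadj m)"
    "cadj ((- \<i>/2) \<cdot>\<^sub>m m + (\<i>/2) \<cdot>\<^sub>m cadj m) = (- \<i>/2) \<cdot>\<^sub>m m + (\<i>/2) \<cdot>\<^sub>m cadj m"
    "m = (1/2) \<cdot>\<^sub>m (m + cadj m) + \<i> \<cdot>\<^sub>m ((- \<i>/2) \<cdot>\<^sub>m m + (\<i>/2) \<cdot>\<^sub>m cadj m)"
proof -
  have d: "dim_row m = n" "dim_col m = n" using mc by auto
  show "cadj ((1/2) \<cdot>\<^sub>m (m + cadj m)) = (1/2) \<cdot>\<^sub>m (m + cadj m)"
  proof (rule eq_matI)
    fix i j assume "i < dim_row ((1/2) \<cdot>\<^sub>m (m + cadj m))" "j < dim_col ((1/2) \<cdot>\<^sub>m (m + cadj m))"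
    then have i: "i < n" and j: "j < n" using d by auto
    show "cadj ((1/2) \<cdot>\<^sub>m (m + cadj m)) $$ (i,j) = ((1/2) \<cdot>\<^sub>m (m + cadj m)) $$ (i,j)"
      using i j d by (simp add: algebra_simps)
  qed (use d in simp_all)
  show "cadj ((- \<i>/2) \<cdot>\<^sub>m m + (\<i>/2) \<cdot>\<^sub>m cadj m) = (- \<i>/2) \<cdot>\<^sub>m m + (\<i>/2) \<cdot>\<^sub>m cadj m"
  proof (rule eq_matI)
    fix i j assume "i < dim_row ((- \<i>/2) \<cdot>\<^sub>m m + (\<i>/2) \<cdot>\<^sub>m cadj m)" "j < dim_col ((- \<i>/2) \<cdot>\<^sub>m m + (\<i>/2) \<cdot>\<^sub>m cadj m)"
    then have i: "i < n" and j: "j < n" using d by auto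
    show "cadj ((- \<i>/2) \<cdot>\<^sub>m m + (\<i>/2) \<cdot>\<^sub>m cadj m) $$ (i,j) = ((- \<i>/2) \<cdot>\<^sub>m m + (\<i>/2) \<cdot>\<^sub>m cadj m) $$ (i,j)"
      using i j d by (simp add: algebra_simps)
  qed (use d in simp_all)
  show "m = (1/2) \<cdot>\<^sub>m (m + cadj m) + \<i> \<cdot>\<^sub>m ((- \<i>/2) \<cdot>\<^sub>m m + (\<i>/2) \<cdot>\<^sub>m cadj m)"
  proof (rule eq_matI)
    fix i j assume "i < dim_row (((1/2) \<cdot>\<^sub>m (m + cadj m) + \<i> \<cdot>\<^sub>m ((- \<i>/2) \<cdot>\<^sub>m m + (\<i>/2) \<cdot>\<^sub>m cadj m)))"
      "j < dim_col (((1/2) \<cdot>\<^sub>m (m + cadj m) + \<i> \<cdot>\<^sub>m ((- \<i>/2) \<cdot>\<^sub>m m + (\<i>/2) \<cdot>\<^sub>m cadj m)))"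
    then have i: "i < n" and j: "j < n" using d by auto
    show "m $$ (i,j) = ((1/2) \<cdot>\<^sub>m (m + cadj m) + \<i> \<cdot>\<^sub>m ((- \<i>/2) \<cdot>\<^sub>m m + (\<i>/2) \<cdot>\<^sub>m cadj m)) $$ (i,j)"
      using i j d by (simp add: algebra_simps)
  qed (use d in simp_all)
qed

lemma qq_lemma: fixes p :: "complex mat" assumes p: "p \<in> carrier_mat n n" and pp: "p * p = p"
  shows "((-2) \<cdot>\<^sub>m p) * ((-2) \<cdot>\<^sub>m p) = (-2) \<cdot>\<^sub>m ((-2) \<cdot>\<^sub>m p)"
proof -
  have e1: "((-2) \<cdot>\<^sub>m p) * ((-2) \<cdot>\<^sub>m p) = (-2) \<cdot>\<^sub>m (p * ((-2) \<cdot>\<^sub>m p))"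
    by (rule mult_smult_assoc_mat[OF p smult_carrier_mat[OF p]])
  have e2: "p * ((-2) \<cdot>\<^sub>m p) = (-2) \<cdot>\<^sub>m (p * p)" by (rule mult_smult_distrib[OF p p])
  show ?thesis unfolding e1 e2 pp ..
qed


lemma lin_aux: fixes x y k :: complex assumes "x - 2 * y = k * x" shows "y = ((1 - k) / 2) * x"
  using assms by (simp add: field_simps)

lemma cadj_self_zero: fixes m :: "complex mat" assumes m: "m \<in> carrier_mat k l"
  and z: "cadj m * m = 0\<^sub>m l l" shows "m = 0\<^sub>m k l"
proof (rule eq_matI)
  fix i j assume i: "i < dim_row (0\<^sub>m k l)" and j: "j < dim_col (0\<^sub>m k l)"
  have "(cadj m * m) $$ (j,j) = (\<Sum>t<k. cnj (m $$ (t,j)) * m $$ (t,j))"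
    using m i j by (simp add: scalar_prod_def atLeast0LessThan)
  also have "\<dots> = (\<Sum>t<k. complex_of_real ((cmod (m $$ (t,j)))\<^sup>2))"
  proof (intro sum.cong refl)
    fix t show "cnj (m $$ (t,j)) * m $$ (t,j) = complex_of_real ((cmod (m $$ (t,j)))\<^sup>2)"
      using complex_norm_square[of "m $$ (t,j)"] by (simp add: mult.commute)
  qed
  also have "\<dots> = complex_of_real (\<Sum>t<k. (cmod (m $$ (t,j)))\<^sup>2)" by (simp only: of_real_sum)
  finally have "complex_of_real (\<Sum>t<k. (cmod (m $$ (t,j)))\<^sup>2) = 0"
    using z i j by simp
  then have "(\<Sum>t<k. (cmod (m $$ (t,j)))\<^sup>2) = 0" by (simp only: of_real_eq_0_iff)
  then have "\<forall>t<k. (cmod (m $$ (t,j)))\<^sup>2 = 0" by (auto simp: sum_nonneg_eq_0_iff)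
  then show "m $$ (i,j) = 0\<^sub>m k l $$ (i,j)" using i j by simp
qed (use m in auto)

lemma one_minus_two_p: fixes p :: "complex mat" assumes p: "p \<in> carrier_mat n n" and pp: "p * p = p"
  shows "(1\<^sub>m n + (-2) \<cdot>\<^sub>m p) * (1\<^sub>m n + (-2) \<cdot>\<^sub>m p) = 1\<^sub>m n"
proof -
  define q where "q = (-2) \<cdot>\<^sub>m p"
  have q: "q \<in> carrier_mat n n" unfolding q_def using p by simp
  have qq: "q * q = (-2) \<cdot>\<^sub>m q" unfolding q_def by (rule qq_lemma[OF p pp])
  have "(1\<^sub>m n + q) * (1\<^sub>m n + q) = 1\<^sub>m n * (1\<^sub>m n + q) + q * (1\<^sub>m n + q)"
    by (rule add_mult_distrib_mat[OF one_carrier_mat q add_carrier_mat[OF q]])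
  also have "\<dots> = (1\<^sub>m n + q) + (q * 1\<^sub>m n + q * q)"
    using mult_add_distrib_mat[OF q one_carrier_mat q] q by simp
  also have "\<dots> = 1\<^sub>m n" unfolding qq using q by (simp, intro eq_matI, auto)
  finally show ?thesis unfolding q_def .
qed

lemma crux_elem:
  assumes X: "qset X" and T: "is_qrel X X T" and refl: "qle (qid X) T" and sym: "qle (qadj T) T"
    and trans: "qle (qcomp X X X T T) T" and nle: "\<not> qle T (qid X)"
  shows "\<exists>ai aj e s s'. ai \<in> At X \<and> aj \<in> At X \<and> e \<in> T ai aj \<and> cadj e * e = s \<cdot>\<^sub>m 1\<^sub>m (dm X ai) \<and> s \<noteq> 0
     \<and> e * cadj e = s' \<cdot>\<^sub>m 1\<^sub>m (dm X aj) \<and> e \<notin> qid X ai aj"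
proof -
  have prod: "\<And>a b c x y. x \<in> T a b \<Longrightarrow> y \<in> T b c \<Longrightarrow> y * x \<in> T a c"
  proof -
    fix a b c x y assume x: "x \<in> T a b" and y: "y \<in> T b c"
    have "y * x \<in> qcomp X X X T T a c" by (rule qcomp_memI[OF T T x y])
    moreover have "qcomp X X X T T a c \<subseteq> T a c" using trans unfolding qle_def by (elim allE)
    ultimately show "y * x \<in> T a c" by (rule subsetD[rotated])
  qed
  have adj: "\<And>a b x. x \<in> T a b \<Longrightarrow> cadj x \<in> T b a"
  proof -
    fix a b x assume x: "x \<in> T a b"
    have "cadj x \<in> qadj T b a" by (rule qadj_mem[of x T a b, OF x])
    moreover have "qadj T b a \<subseteq> T b a" using sym unfolding qle_def by (elim allE)
    ultimately show "cadj x \<in> T b a" by (rule subsetD[rotated])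
  qed
  have one: "\<And>a. a \<in> At X \<Longrightarrow> 1\<^sub>m (dm X a) \<in> T a a"
  proof -
    fix a assume a: "a \<in> At X"
    have "1\<^sub>m (dm X a) \<in> qid X a a" unfolding qid_same[OF a] by (subst one_scal) (rule scal_mem)
    then show "1\<^sub>m (dm X a) \<in> T a a" using refl unfolding qle_def by blast
  qed
  show ?thesis
  proof (cases "\<exists>a\<in>At X. \<exists>m\<in>T a a. \<forall>c. m \<noteq> c \<cdot>\<^sub>m 1\<^sub>m (dm X a)")
    case True
    then obtain a m where a: "a \<in> At X" and m: "m \<in> T a a" and ns: "\<forall>c. m \<noteq> c \<cdot>\<^sub>m 1\<^sub>m (dm X a)" by blast
    define n where "n = dm X a"
    have npos: "0 < n" using X a unfolding qset_def n_def by auto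
    have mc: "m \<in> carrier_mat n n" using qrel_mem(3)[OF T m] unfolding n_def .
    define A where "A = T a a"
    have Ac: "A \<subseteq> carrier_mat n n" unfolding A_def n_def using qrel_mem(3)[OF T] by blast
    have A1: "1\<^sub>m n \<in> A" unfolding A_def n_def by (rule one[OF a])
    have Am: "\<forall>x\<in>A. \<forall>y\<in>A. x * y \<in> A" unfolding A_def using prod by blast
    have Aa: "\<forall>x\<in>A. \<forall>y\<in>A. x + y \<in> A" unfolding A_def using qrel_add[OF T] by blast
    have As: "\<forall>c. \<forall>x\<in>A. c \<cdot>\<^sub>m x \<in> A" unfolding A_def using qrel_smult[OF T] by blast
    have Aadj: "\<forall>x\<in>A. cadj x \<in> A" unfolding A_def using adj by blast
    define h1 where "h1 = (1/2) \<cdot>\<^sub>m (m + cadj m)"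
    define h2 where "h2 = (- \<i>/2) \<cdot>\<^sub>m m + (\<i>/2) \<cdot>\<^sub>m cadj m"
    have h1c: "h1 \<in> carrier_mat n n" unfolding h1_def using mc by simp
    have h2c: "h2 \<in> carrier_mat n n" unfolding h2_def using mc by simp
    have h1A: "h1 \<in> A" unfolding h1_def using m Aa As Aadj unfolding A_def by blast
    have h2A: "h2 \<in> A" unfolding h2_def using m Aa As Aadj unfolding A_def by blast
    have h1h: "cadj h1 = h1" unfolding h1_def by (rule herm_parts(1)[OF mc])
    have h2h: "cadj h2 = h2" unfolding h2_def by (rule herm_parts(2)[OF mc])
    have mh: "m = h1 + \<i> \<cdot>\<^sub>m h2" unfolding h1_def h2_def by (rule herm_parts(3)[OF mc])
    have "\<exists>h. h \<in> A \<and> h \<in> carrier_mat n n \<and> cadj h = h \<and> (\<forall>c. h \<noteq> c \<cdot>\<^sub>m 1\<^sub>m n)"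
    proof (rule ccontr)
      assume "\<not> ?thesis"
      then obtain c1 c2 where c1: "h1 = c1 \<cdot>\<^sub>m 1\<^sub>m n" and c2: "h2 = c2 \<cdot>\<^sub>m 1\<^sub>m n"
        using h1A h2A h1c h2c h1h h2h by blast
      have "m = (c1 + \<i> * c2) \<cdot>\<^sub>m 1\<^sub>m n" unfolding mh c1 c2 by (intro eq_matI) (auto simp: algebra_simps)
      with ns show False unfolding n_def by blast
    qed
    then obtain h where hA: "h \<in> A" and hc: "h \<in> carrier_mat n n" and hh: "cadj h = h"
      and hns: "\<forall>c. h \<noteq> c \<cdot>\<^sub>m 1\<^sub>m n" by blast
    obtain p where pA: "p \<in> A" and pp: "p * p = p" and ph: "cadj p = p" and p0: "p \<noteq> 0\<^sub>m n n"
      and p1: "p \<noteq> 1\<^sub>m n"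
      using herm_proj[OF hc hh hns hA A1 Am Aa As] by blast
    have pc: "p \<in> carrier_mat n n" using pA Ac by blast
    define e where "e = 1\<^sub>m n + (-2) \<cdot>\<^sub>m p"
    have eA: "e \<in> A" unfolding e_def using A1 pA Aa As by blast
    have eh: "cadj e = e" unfolding e_def using pc ph cadj_add[OF one_carrier_mat smult_carrier_mat[OF pc]] by simp
    have ee: "e * e = 1\<^sub>m n" unfolding e_def by (rule one_minus_two_p[OF pc pp])
    have ens: "e \<notin> qid X a a"
    proof
      assume "e \<in> qid X a a"
      then obtain k where ek: "e = k \<cdot>\<^sub>m 1\<^sub>m n" unfolding qid_same[OF a] n_def by blast
      have pk: "p = ((1 - k) / 2) \<cdot>\<^sub>m 1\<^sub>m n"
      proof (rule eq_matI)
        fix i j assume i: "i < dim_row (((1 - k) / 2) \<cdot>\<^sub>m 1\<^sub>m n)" and j: "j < dim_col (((1 - k) / 2) \<cdot>\<^sub>m 1\<^sub>m n)"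
        have ij: "i < n" "j < n" using i j by auto
        have "e $$ (i,j) = (k \<cdot>\<^sub>m 1\<^sub>m n) $$ (i,j)" unfolding ek ..
        then have "1\<^sub>m n $$ (i,j) - 2 * p $$ (i,j) = k * 1\<^sub>m n $$ (i,j)"
          unfolding e_def using ij pc by (simp del: index_one_mat(1))
        then have "p $$ (i,j) = ((1 - k) / 2) * 1\<^sub>m n $$ (i,j)" by (rule lin_aux)
        then show "p $$ (i,j) = (((1 - k) / 2) \<cdot>\<^sub>m 1\<^sub>m n) $$ (i,j)"
          using ij by (simp del: index_one_mat(1))
      qed (use pc in auto)
      define t where "t = (1 - k) / 2"
      have "p * p = t \<cdot>\<^sub>m (t \<cdot>\<^sub>m 1\<^sub>m n)" unfolding pk t_def[symmetric]
        by (rule left_sc[OF smult_carrier_mat[OF one_carrier_mat]])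
      then have "(p * p) $$ (0,0) = t * t" using npos by simp
      moreover have "p $$ (0,0) = t" unfolding pk t_def using npos by simp
      ultimately have "t * t = t" using pp by simp
      then have "t = 0 \<or> t = 1" by (metis mult_cancel_right2 mult_zero_left)
      then show False using p0 p1 pk unfolding t_def[symmetric]
        by (auto simp: zero_scal[symmetric] one_scal[symmetric])
    qed
    have e1: "cadj e * e = 1 \<cdot>\<^sub>m 1\<^sub>m (dm X a)" using eh ee one_scal unfolding n_def by simp
    have e2: "e * cadj e = 1 \<cdot>\<^sub>m 1\<^sub>m (dm X a)" using eh ee one_scal unfolding n_def by simp
    have eT: "e \<in> T a a" using eA unfolding A_def .
    have "(1::complex) \<noteq> 0" by simp
    with a eT e1 e2 ens show ?thesis by blast
  next
    case False
    then have scal: "\<And>a m. a \<in> At X \<Longrightarrow> m \<in> T a a \<Longrightarrow> \<exists>c. m = c \<cdot>\<^sub>m 1\<^sub>m (dm X a)" by blast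
    from nle obtain a b m where m: "m \<in> T a b" and mq: "m \<notin> qid X a b" unfolding qle_def by blast
    have a: "a \<in> At X" and b: "b \<in> At X" and mc: "m \<in> carrier_mat (dm X b) (dm X a)"
      using qrel_mem[OF T m] by auto
    have ab: "a \<noteq> b"
    proof
      assume "a = b"
      then obtain c where "m = c \<cdot>\<^sub>m 1\<^sub>m (dm X a)" using scal[OF a] m by blast
      then show False using mq \<open>a = b\<close> qid_same[OF a] by auto
    qed
    have mm: "cadj m * m \<in> T a a" by (rule prod[OF m adj[OF m]])
    obtain s where s: "cadj m * m = s \<cdot>\<^sub>m 1\<^sub>m (dm X a)" using scal[OF a mm] by blast
    have mm': "m * cadj m \<in> T b b" by (rule prod[OF adj[OF m] m])
    obtain s' where s': "m * cadj m = s' \<cdot>\<^sub>m 1\<^sub>m (dm X b)" using scal[OF b mm'] by blast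
    have s0: "s \<noteq> 0"
    proof
      assume "s = 0"
      then have "cadj m * m = 0\<^sub>m (dm X a) (dm X a)" using s by (simp add: zero_scal)
      then have "m = 0\<^sub>m (dm X b) (dm X a)" by (rule cadj_self_zero[OF mc])
      then show False using mq qid_diff[OF a b ab] by simp
    qed
    show ?thesis using a b m s s0 s' mq by blast
  qed
qed



definition sgl :: "'a qset \<Rightarrow> 'y \<Rightarrow> nat \<Rightarrow> 'a \<Rightarrow> complex mat \<Rightarrow> ('y,'a) qrel" where
  "sgl X y0 d b e = (\<lambda>y a. if y = y0 \<and> a \<in> At X then (if a = b then {c \<cdot>\<^sub>m e | c. True} else {0\<^sub>m (dm X a) d}) else {})"

definition aqs :: "'y \<Rightarrow> nat \<Rightarrow> 'y qset" where "aqs y0 d = ({y0}, \<lambda>_. d)"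

lemma aqs_At[simp]: "At (aqs y0 d) = {y0}" unfolding aqs_def At_def by simp
lemma aqs_dm[simp]: "dm (aqs y0 d) y = d" unfolding aqs_def dm_def by simp

lemma line_subspace: fixes e :: "complex mat" assumes e: "e \<in> carrier_mat n m"
  shows "mat_subspace n m {c \<cdot>\<^sub>m e | c. True}"
  unfolding mat_subspace_def
proof (intro conjI ballI allI impI)
  show "{c \<cdot>\<^sub>m e | c. True} \<subseteq> carrier_mat n m" using e by auto
  have "0\<^sub>m n m = 0 \<cdot>\<^sub>m e" using e by (intro eq_matI) auto
  then show "0\<^sub>m n m \<in> {c \<cdot>\<^sub>m e | c. True}" by blast
next
  fix x y assume "x \<in> {c \<cdot>\<^sub>m e | c. True}" "y \<in> {c \<cdot>\<^sub>m e | c. True}"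
  then obtain c1 c2 where "x = c1 \<cdot>\<^sub>m e" "y = c2 \<cdot>\<^sub>m e" by blast
  moreover have "c1 \<cdot>\<^sub>m e + c2 \<cdot>\<^sub>m e = (c1 + c2) \<cdot>\<^sub>m e" using e by (intro eq_matI) (auto simp: algebra_simps)
  ultimately show "x + y \<in> {c \<cdot>\<^sub>m e | c. True}" by blast
next
  fix k :: complex and x assume "x \<in> {c \<cdot>\<^sub>m e | c. True}"
  then obtain c1 where "x = c1 \<cdot>\<^sub>m e" by blast
  moreover have "k \<cdot>\<^sub>m (c1 \<cdot>\<^sub>m e) = (k * c1) \<cdot>\<^sub>m e" using e by (intro eq_matI) auto
  ultimately show "k \<cdot>\<^sub>m x \<in> {c \<cdot>\<^sub>m e | c. True}" by blast
qed

lemma zero_subspace: "mat_subspace n m {0\<^sub>m n m :: complex mat}"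
  unfolding mat_subspace_def by auto

lemma zero_in_qid: assumes a: "a \<in> At X" and c: "c \<in> At X" shows "0\<^sub>m (dm X c) (dm X a) \<in> qid X a c"
proof (cases "a = c")
  case True
  show ?thesis unfolding True qid_same[OF c] by (subst zero_scal) (rule scal_mem)
next
  case False then show ?thesis using qid_diff[OF a c] by simp
qed

lemma sgl_same: "a \<in> At X \<Longrightarrow> sgl X y0 d a e y0 a = {c \<cdot>\<^sub>m e | c. True}"
  unfolding sgl_def by simp
lemma sgl_diff: "a \<in> At X \<Longrightarrow> a \<noteq> b \<Longrightarrow> sgl X y0 d b e y0 a = {0\<^sub>m (dm X a) d}"
  unfolding sgl_def by simp

lemma sgl_rel: assumes b: "b \<in> At X" and e: "e \<in> carrier_mat (dm X b) d"
  shows "is_qrel (aqs y0 d) X (sgl X y0 d b e)"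
proof (rule qrelI)
  fix y a assume y: "y \<in> At (aqs y0 d)" and a: "a \<in> At X"
  then have yy: "y = y0" by simp
  show "mat_subspace (dm X a) (dm (aqs y0 d) y) (sgl X y0 d b e y a)"
  proof (cases "a = b")
    case True show ?thesis unfolding yy True sgl_same[OF b] aqs_dm by (rule line_subspace[OF e])
  next
    case False show ?thesis unfolding yy sgl_diff[OF a False] aqs_dm by (rule zero_subspace)
  qed
next
  fix y a assume "\<not> (y \<in> At (aqs y0 d) \<and> a \<in> At X)"
  then show "sgl X y0 d b e y a = {}" unfolding sgl_def by auto
qed

lemma sgl_mem: "sgl X y0 d b e y a \<noteq> {} \<Longrightarrow> y = y0 \<and> a \<in> At X"
  unfolding sgl_def by (auto split: if_splits)

lemma sgl_fun: fixes e :: "complex mat"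
  assumes b: "b \<in> At X" and e: "e \<in> carrier_mat (dm X b) d"
  and s: "cadj e * e = s \<cdot>\<^sub>m 1\<^sub>m d" and s0: "s \<noteq> 0" and s': "e * cadj e = s' \<cdot>\<^sub>m 1\<^sub>m (dm X b)"
  shows "qfun (aqs y0 d) X (sgl X y0 d b e)"
proof -
  let ?Y = "aqs y0 d" and ?G = "sgl X y0 d b e"
  have G: "is_qrel ?Y X ?G" by (rule sgl_rel[OF b e])
  have 1: "qle (qcomp X ?Y X ?G (qadj ?G)) (qid X)"
  proof (rule qcomp_leI[OF qid_rel])
    fix a c y r t assume a: "a \<in> At X" and c: "c \<in> At X" and y: "y \<in> At ?Y"
      and r: "r \<in> qadj ?G a y" and t: "t \<in> ?G y c"
    have yy: "y = y0" using y by simp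
    obtain g where rg: "r = cadj g" and g: "g \<in> ?G y a" using r unfolding qadj_apply by blast
    have gc: "g \<in> carrier_mat (dm X a) d" using qrel_mem(3)[OF G g] by simp
    have tc: "t \<in> carrier_mat (dm X c) d" using qrel_mem(3)[OF G t] by simp
    show "t * r \<in> qid X a c"
    proof (cases "a = b \<and> c = b")
      case True
      then obtain k1 k2 where g': "g = k1 \<cdot>\<^sub>m e" and t': "t = k2 \<cdot>\<^sub>m e"
        using g t yy a unfolding sgl_def by auto
      have "t * r = (k2 \<cdot>\<^sub>m e) * (cnj k1 \<cdot>\<^sub>m cadj e)" unfolding rg g' t' by simp
      also have "\<dots> = k2 \<cdot>\<^sub>m (e * (cnj k1 \<cdot>\<^sub>m cadj e))"
        by (rule mult_smult_assoc_mat[OF e smult_carrier_mat[OF cadj_carrier[OF e]]])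
      also have "e * (cnj k1 \<cdot>\<^sub>m cadj e) = cnj k1 \<cdot>\<^sub>m (e * cadj e)"
        by (rule mult_smult_distrib[OF e cadj_carrier[OF e]])
      finally have "t * r = k2 \<cdot>\<^sub>m (cnj k1 \<cdot>\<^sub>m (s' \<cdot>\<^sub>m 1\<^sub>m (dm X b)))" unfolding s' .
      also have "\<dots> = (k2 * cnj k1 * s') \<cdot>\<^sub>m 1\<^sub>m (dm X b)" by (intro eq_matI) auto
      finally have "t * r = (k2 * cnj k1 * s') \<cdot>\<^sub>m 1\<^sub>m (dm X b)" .
      then show ?thesis using True qid_same[OF b] by auto
    next
      case False
      then have "g = 0\<^sub>m (dm X a) d \<or> t = 0\<^sub>m (dm X c) d"
        using g t yy a c unfolding sgl_def by (auto split: if_splits)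
      then have "t * r = 0\<^sub>m (dm X c) (dm X a)" unfolding rg using gc tc by auto
      then show ?thesis using zero_in_qid[OF a c] by simp
    qed
  qed
  have 2: "qle (qid ?Y) (qcomp ?Y X ?Y (qadj ?G) ?G)"
    unfolding qle_def
  proof (intro allI subsetI)
    fix y y' x assume x: "x \<in> qid ?Y y y'"
    have yy: "y = y0" "y' = y0" using x qid_off[of y ?Y y'] by auto
    obtain k where xk: "x = k \<cdot>\<^sub>m 1\<^sub>m d" using x unfolding yy qid_same[of y0 ?Y, simplified] by auto
    have eG: "e \<in> ?G y0 b" unfolding sgl_def using b e by (auto intro!: exI[of _ 1])
    have "cadj e * e \<in> qcomp ?Y X ?Y (qadj ?G) ?G y0 y0"
      by (rule qcomp_memI[OF G qadj_rel[OF G] eG qadj_mem[of e ?G y0 b, OF eG]])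
    then have "(k / s) \<cdot>\<^sub>m (cadj e * e) \<in> qcomp ?Y X ?Y (qadj ?G) ?G y0 y0"
      by (rule qrel_smult[OF qcomp_rel[OF G qadj_rel[OF G]]])
    moreover have "(k / s) \<cdot>\<^sub>m (cadj e * e) = x" unfolding s xk using s0 by (intro eq_matI) auto
    ultimately show "x \<in> qcomp ?Y X ?Y (qadj ?G) ?G y y'" unfolding yy by simp
  qed
  show ?thesis unfolding qfun_def using G 1 2 by blast
qed

lemma crux_funs:
  assumes X: "qset X" and T: "is_qrel X X T" and ai: "ai \<in> At X" and aj: "aj \<in> At X"
    and eT: "e \<in> T ai aj" and s: "cadj e * e = s \<cdot>\<^sub>m 1\<^sub>m (dm X ai)" and s0: "s \<noteq> 0"
    and s': "e * cadj e = s' \<cdot>\<^sub>m 1\<^sub>m (dm X aj)" and eq: "e \<notin> qid X ai aj"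
  shows "\<exists>(Y :: 'y qset) F G. qset Y \<and> qfun Y X F \<and> qfun Y X G \<and> F \<noteq> G \<and> qle G (qcomp Y X X T F)"
proof -
  define y0 :: 'y where "y0 = undefined"
  define d where "d = dm X ai"
  define Y where "Y = aqs y0 d"
  define F where "F = sgl X y0 d ai (1\<^sub>m d)"
  define G where "G = sgl X y0 d aj e"
  have ec: "e \<in> carrier_mat (dm X aj) d" using qrel_mem(3)[OF T eT] unfolding d_def .
  have dpos: "0 < d" using X ai unfolding qset_def d_def by auto
  have QY: "qset Y" unfolding Y_def qset_def using dpos by simp
  have Ff: "qfun Y X F" unfolding Y_def F_def
    by (rule sgl_fun[where b=ai and e="1\<^sub>m d" and s=1 and s'=1]) (auto simp: ai d_def one_scal[symmetric])
  have Gf: "qfun Y X G" unfolding Y_def G_def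
    by (rule sgl_fun[OF aj ec _ s0 s']) (use s in \<open>simp add: d_def\<close>)
  have Fr: "is_qrel Y X F" by (rule qfunD(1)[OF Ff])
  have Fq: "F y0 aj = qid X ai aj"
    unfolding F_def sgl_def d_def using aj ai by (cases "aj = ai") (auto simp: qid_same qid_diff)
  have eG: "e \<in> G y0 aj" unfolding G_def sgl_def using aj by (auto intro!: exI[of _ 1] simp: ec)
  have FG: "F \<noteq> G" using eG eq Fq by auto
  have le: "qle G (qcomp Y X X T F)" unfolding qle_def
  proof (intro allI subsetI)
    fix y a x assume x: "x \<in> G y a"
    have yy: "y = y0" and a: "a \<in> At X" using sgl_mem[of X y0 d aj e y a] x unfolding G_def by auto
    have TF: "is_qrel Y X (qcomp Y X X T F)" by (rule qcomp_rel[OF Fr T])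
    show "x \<in> qcomp Y X X T F y a"
    proof (cases "a = aj")
      case True
      then obtain k where xk: "x = k \<cdot>\<^sub>m e" using x yy a unfolding G_def sgl_def by auto
      have oneF: "1\<^sub>m d \<in> F y0 ai" unfolding F_def sgl_def using ai by (auto intro!: exI[of _ 1])
      have "e * 1\<^sub>m d \<in> qcomp Y X X T F y0 aj" by (rule qcomp_memI[OF Fr T oneF eT])
      then have "e \<in> qcomp Y X X T F y0 aj" using ec by simp
      then show ?thesis unfolding xk yy True by (rule qrel_smult[OF TF])
    next
      case False
      then have "x = 0\<^sub>m (dm X a) d" using x yy a unfolding G_def sgl_def by auto
      moreover have "y0 \<in> At Y" unfolding Y_def by simp
      ultimately show ?thesis using qrel_zero[OF TF _ a, of y0] unfolding yy Y_def by simp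
    qed
  qed
  show ?thesis using QY Ff Gf FG le by blast
qed



lemma JJdB: assumes J: "qfun X Y J" and B: "is_qrel X Y B"
  shows "qle (qcomp X X Y J (qcomp X Y X (qadj J) B)) B"
proof -
  note Jr = qfunD(1)[OF J]
  have "qcomp X X Y J (qcomp X Y X (qadj J) B) = qcomp X Y Y (qcomp Y X Y J (qadj J)) B"
    by (rule qcomp_assoc[OF B qadj_rel[OF Jr] Jr, symmetric])
  also have "qle \<dots> (qcomp X Y Y (qid Y) B)" by (rule qcomp_mono[OF qle_refl qfunD(2)[OF J]])
  also have "qcomp X Y Y (qid Y) B = B" by (rule qcomp_id_left[OF B])
  finally show ?thesis .
qed

lemma T_rel: assumes J: "qfun X Y J" and R: "is_qrel Y Y R"
  shows "is_qrel X X (qcomp X Y X (qadj J) (qcomp X Y Y R J))"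
  using qcomp_rel[OF qcomp_rel[OF qfunD(1)[OF J] R] qadj_rel[OF qfunD(1)[OF J]]] .

lemma T_refl: assumes J: "qfun X Y J" and R: "is_qrel Y Y R" and refl: "qle (qid Y) R"
  shows "qle (qid X) (qcomp X Y X (qadj J) (qcomp X Y Y R J))"
proof -
  note Jr = qfunD(1)[OF J]
  have "qle (qid X) (qcomp X Y X (qadj J) J)" by (rule qfunD(3)[OF J])
  also have "qcomp X Y X (qadj J) J = qcomp X Y X (qadj J) (qcomp X Y Y (qid Y) J)"
    using qcomp_id_left[OF Jr] by simp
  also have "qle \<dots> (qcomp X Y X (qadj J) (qcomp X Y Y R J))"
    by (rule qcomp_mono[OF qcomp_mono[OF qle_refl refl] qle_refl])
  finally show ?thesis .
qed

lemma T_trans: assumes J: "qfun X Y J" and R: "is_qrel Y Y R" and tr: "qle (qcomp Y Y Y R R) R"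
  defines "T \<equiv> qcomp X Y X (qadj J) (qcomp X Y Y R J)"
  shows "qle (qcomp X X X T T) T"
proof -
  note Jr = qfunD(1)[OF J]
  note Jd = qadj_rel[OF Jr]
  define A where "A = qcomp X Y Y R J"
  have Ar: "is_qrel X Y A" unfolding A_def by (rule qcomp_rel[OF Jr R])
  have Tr: "is_qrel X X T" unfolding T_def by (rule T_rel[OF J R])
  have TA: "T = qcomp X Y X (qadj J) A" unfolding T_def A_def ..
  have "qcomp X X X T T = qcomp X Y X (qadj J) (qcomp X X Y A T)"
    unfolding TA by (rule qcomp_assoc[OF qcomp_rel[OF Ar Jd] Ar Jd])
  also have "qle \<dots> (qcomp X Y X (qadj J) A)"
  proof (rule qcomp_mono[OF _ qle_refl])
    have "qcomp X X Y A T = qcomp X Y Y (qcomp Y X Y A (qadj J)) A"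
      unfolding TA by (rule qcomp_assoc[OF Ar Jd Ar, symmetric])
    also have "qle \<dots> (qcomp X Y Y R A)"
      by (rule qcomp_mono[OF qle_refl]) (unfold A_def, rule TFFd[OF J R])
    also have "qcomp X Y Y R A = qcomp X Y Y (qcomp Y Y Y R R) J"
      unfolding A_def by (rule qcomp_assoc[OF Jr R R, symmetric])
    also have "qle \<dots> A" unfolding A_def by (rule qcomp_mono[OF qle_refl tr])
    finally show "qle (qcomp X X Y A T) A" .
  qed
  finally show ?thesis unfolding TA .
qed

lemma T_adj: assumes J: "qfun X Y J" and R: "is_qrel Y Y R"
  shows "qadj (qcomp X Y X (qadj J) (qcomp X Y Y R J)) = qcomp X Y X (qadj J) (qcomp X Y Y (qadj R) J)"
proof -
  note Jr = qfunD(1)[OF J]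
  note Jd = qadj_rel[OF Jr]
  have A: "is_qrel X Y (qcomp X Y Y R J)" by (rule qcomp_rel[OF Jr R])
  have "qadj (qcomp X Y X (qadj J) (qcomp X Y Y R J)) = qcomp X Y X (qadj (qcomp X Y Y R J)) (qadj (qadj J))"
    by (rule qadj_comp[OF A Jd])
  also have "qadj (qcomp X Y Y R J) = qcomp Y Y X (qadj J) (qadj R)" by (rule qadj_comp[OF Jr R])
  also have "qcomp X Y X (qcomp Y Y X (qadj J) (qadj R)) (qadj (qadj J)) = qcomp X Y X (qadj J) (qcomp X Y Y (qadj R) J)"
    using qcomp_assoc[OF Jr qadj_rel[OF R] Jd] by simp
  finally show ?thesis .
qed



theorem mainTheorem4:
  fixes Ob :: "'o set" and Ar :: "'m set" and src tgt :: "'m \<Rightarrow> 'o"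
    and cmp :: "'m \<Rightarrow> 'm \<Rightarrow> 'm" and idA :: "'o \<Rightarrow> 'm"
    and DX :: "'o \<Rightarrow> 'b qset" and DR :: "'o \<Rightarrow> ('b,'b) qrel" and DF :: "'m \<Rightarrow> ('b,'b) qrel"
    and X :: "'x qset" and J :: "'o \<Rightarrow> ('x,'b) qrel"
  assumes "small_category Ob Ar src tgt cmp idA"
    and "qpos_diagram Ob Ar src tgt cmp idA DX DR DF"
    and "qset_limit TYPE('y) Ob Ar src tgt DX DF X J"
  shows "let R = qMeet X X Ob (\<lambda>x. qcomp X (DX x) X (qadj (J x))
                      (qcomp X (DX x) (DX x) (DR x) (J x)))
         in qposet X R \<and> qpos_limit TYPE('y) Ob Ar src tgt DX DR DF X R J"
proof -
  note cat = assms(1) and dia = assms(2) and lim = assms(3)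
  have srctgt: "\<And>f. f \<in> Ar \<Longrightarrow> src f \<in> Ob \<and> tgt f \<in> Ob"
    using cat unfolding small_category_def by blast
  have pos: "\<And>x. x \<in> Ob \<Longrightarrow> qposet (DX x) (DR x)"
    using dia unfolding qpos_diagram_def by blast
  have DFmono: "\<And>f. f \<in> Ar \<Longrightarrow> qmono (DX (src f)) (DR (src f)) (DX (tgt f)) (DR (tgt f)) (DF f)"
    using dia unfolding qpos_diagram_def by blast
  have DFr: "\<And>f. f \<in> Ar \<Longrightarrow> is_qrel (DX (src f)) (DX (tgt f)) (DF f)"
    using DFmono unfolding qmono_def qfun_def by blast
  have QX: "qset X" using lim unfolding qset_limit_def by blast
  have Jf: "\<And>x. x \<in> Ob \<Longrightarrow> qfun X (DX x) (J x)"
    using lim unfolding qset_limit_def qset_cone_def by blast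
  have Jcone: "\<And>f. f \<in> Ar \<Longrightarrow> qcomp X (DX (src f)) (DX (tgt f)) (DF f) (J (src f)) = J (tgt f)"
    using lim unfolding qset_limit_def qset_cone_def by blast
  have univ: "\<And>(Y :: 'y qset) K. qset Y \<Longrightarrow> qset_cone Ob Ar src tgt DX DF Y K \<Longrightarrow>
        (\<exists>!F. qfun Y X F \<and> (\<forall>x\<in>Ob. qcomp Y X (DX x) (J x) F = K x))"
    using lim unfolding qset_limit_def by blast
  have Rx: "\<And>x. x \<in> Ob \<Longrightarrow> is_qrel (DX x) (DX x) (DR x)"
    and Rrefl: "\<And>x. x \<in> Ob \<Longrightarrow> qle (qid (DX x)) (DR x)"
    and Rtrans: "\<And>x. x \<in> Ob \<Longrightarrow> qle (qcomp (DX x) (DX x) (DX x) (DR x) (DR x)) (DR x)"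
    and Ranti: "\<And>x. x \<in> Ob \<Longrightarrow> qle (qinf (DR x) (qadj (DR x))) (qid (DX x))"
    using pos unfolding qposet_def by blast+
  define T where "T = (\<lambda>x. qcomp X (DX x) X (qadj (J x)) (qcomp X (DX x) (DX x) (DR x) (J x)))"
  define R where "R = qMeet X X Ob T"
  have Tr: "\<And>x. x \<in> Ob \<Longrightarrow> is_qrel X X (T x)" unfolding T_def by (rule T_rel[OF Jf Rx])
  have Rr: "is_qrel X X R" unfolding R_def by (rule qMeet_rel[OF Tr])
  have RT: "\<And>x. x \<in> Ob \<Longrightarrow> qle R (T x)" unfolding R_def by (rule qMeet_le)
  have Rrefl': "qle (qid X) R" unfolding R_def
    by (rule qMeet_greatest[OF qid_rel]) (unfold T_def, rule T_refl[OF Jf Rx Rrefl])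
  have Rtrans': "qle (qcomp X X X R R) R" unfolding R_def
  proof (rule qMeet_greatest[OF qcomp_rel[OF qMeet_rel[OF Tr] qMeet_rel[OF Tr]]])
    fix x assume x: "x \<in> Ob"
    have "qle (qcomp X X X (qMeet X X Ob T) (qMeet X X Ob T)) (qcomp X X X (T x) (T x))"
      by (rule qcomp_mono[OF qMeet_le[OF x] qMeet_le[OF x]])
    also have "qle \<dots> (T x)" unfolding T_def by (rule T_trans[OF Jf[OF x] Rx[OF x] Rtrans[OF x]])
    finally show "qle (qcomp X X X (qMeet X X Ob T) (qMeet X X Ob T)) (T x)" .
  qed
  have JR: "\<And>x. x \<in> Ob \<Longrightarrow> qle (qcomp X X (DX x) (J x) R) (qcomp X (DX x) (DX x) (DR x) (J x))"
  proof -
    fix x assume x: "x \<in> Ob"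
    have "qle (qcomp X X (DX x) (J x) R) (qcomp X X (DX x) (J x) (T x))"
      by (rule qcomp_mono[OF RT[OF x] qle_refl])
    also have "qle \<dots> (qcomp X (DX x) (DX x) (DR x) (J x))" unfolding T_def
      by (rule JJdB[OF Jf[OF x] qcomp_rel[OF qfunD(1)[OF Jf[OF x]] Rx[OF x]]])
    finally show "qle (qcomp X X (DX x) (J x) R) (qcomp X (DX x) (DX x) (DR x) (J x))" .
  qed
  have Ranti': "qle (qinf R (qadj R)) (qid X)"
  proof (rule ccontr)
    assume nle: "\<not> qle (qinf R (qadj R)) (qid X)"
    define Tq where "Tq = qinf R (qadj R)"
    have Tqr: "is_qrel X X Tq" unfolding Tq_def by (rule qinf_rel[OF Rr qadj_rel[OF Rr]])
    have Tq_refl: "qle (qid X) Tq" unfolding Tq_def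
      by (rule qinf_greatest[OF Rrefl']) (use qadj_mono[OF Rrefl'] in simp)
    have Tq_sym: "qle (qadj Tq) Tq" unfolding Tq_def qadj_qinf qadj_qadj
      by (rule qinf_greatest[OF qinf_le2 qinf_le1])
    have Tq_trans: "qle (qcomp X X X Tq Tq) Tq" unfolding Tq_def
    proof (rule qinf_greatest)
      show "qle (qcomp X X X (qinf R (qadj R)) (qinf R (qadj R))) R"
        using qle_trans[OF qcomp_mono[OF qinf_le1 qinf_le1] Rtrans'] .
      have "qle (qcomp X X X (qinf R (qadj R)) (qinf R (qadj R))) (qcomp X X X (qadj R) (qadj R))"
        by (rule qcomp_mono[OF qinf_le2 qinf_le2])
      also have "qcomp X X X (qadj R) (qadj R) = qadj (qcomp X X X R R)" by (rule qadj_comp[OF Rr Rr, symmetric])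
      also have "qle \<dots> (qadj R)" by (rule qadj_mono[OF Rtrans'])
      finally show "qle (qcomp X X X (qinf R (qadj R)) (qinf R (qadj R))) (qadj R)" .
    qed
    obtain ai aj e s s' where ai: "ai \<in> At X" and aj: "aj \<in> At X" and eT: "e \<in> Tq ai aj"
      and s: "cadj e * e = s \<cdot>\<^sub>m 1\<^sub>m (dm X ai)" and s0: "s \<noteq> 0"
      and s': "e * cadj e = s' \<cdot>\<^sub>m 1\<^sub>m (dm X aj)" and eq: "e \<notin> qid X ai aj"
      using crux_elem[OF QX Tqr Tq_refl Tq_sym Tq_trans nle[folded Tq_def]] by blast
    obtain Y :: "'y qset" and F G where QY: "qset Y" and Ff: "qfun Y X F" and Gf: "qfun Y X G"
      and FG: "F \<noteq> G" and GTF: "qle G (qcomp Y X X Tq F)"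
      using crux_funs[OF QX Tqr ai aj eT s s0 s' eq] by blast
    have Fr: "is_qrel Y X F" by (rule qfunD(1)[OF Ff])
    have JTq: "\<And>x. x \<in> Ob \<Longrightarrow> qle (qcomp X X (DX x) (J x) Tq) (J x)"
    proof -
      fix x assume x: "x \<in> Ob"
      note Jx = Jf[OF x] and Jr = qfunD(1)[OF Jf[OF x]]
      have W: "is_qrel X (DX x) (qcomp X X (DX x) (J x) Tq)" by (rule qcomp_rel[OF Tqr Jr])
      have le1: "qle (qcomp X X (DX x) (J x) Tq) (qcomp X (DX x) (DX x) (DR x) (J x))"
        using qle_trans[OF qcomp_mono[OF qinf_le1 qle_refl] JR[OF x]] unfolding Tq_def .
      have "qle Tq (qadj (T x))" unfolding Tq_def by (rule qle_trans[OF qinf_le2 qadj_mono[OF RT[OF x]]])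
      then have "qle Tq (qcomp X (DX x) X (qadj (J x)) (qcomp X (DX x) (DX x) (qadj (DR x)) (J x)))"
        unfolding T_def T_adj[OF Jx Rx[OF x]] .
      then have "qle (qcomp X X (DX x) (J x) Tq) (qcomp X X (DX x) (J x) (qcomp X (DX x) X (qadj (J x)) (qcomp X (DX x) (DX x) (qadj (DR x)) (J x))))"
        by (rule qcomp_mono[OF _ qle_refl])
      also have "qle \<dots> (qcomp X (DX x) (DX x) (qadj (DR x)) (J x))"
        by (rule JJdB[OF Jx qcomp_rel[OF Jr qadj_rel[OF Rx[OF x]]]])
      finally have le2: "qle (qcomp X X (DX x) (J x) Tq) (qcomp X (DX x) (DX x) (qadj (DR x)) (J x))" .
      have "qle (qcomp X X (DX x) (J x) Tq) (qcomp X (DX x) (DX x) (qinf (DR x) (qadj (DR x))) (J x))"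
        by (rule fun_inf[OF Jx W Rx[OF x] qadj_rel[OF Rx[OF x]] le1 le2])
      also have "qle \<dots> (qcomp X (DX x) (DX x) (qid (DX x)) (J x))"
        by (rule qcomp_mono[OF qle_refl Ranti[OF x]])
      also have "qcomp X (DX x) (DX x) (qid (DX x)) (J x) = J x" by (rule qcomp_id_left[OF Jr])
      finally show "qle (qcomp X X (DX x) (J x) Tq) (J x)" .
    qed
    have JFG: "\<And>x. x \<in> Ob \<Longrightarrow> qcomp Y X (DX x) (J x) F = qcomp Y X (DX x) (J x) G"
    proof -
      fix x assume x: "x \<in> Ob"
      note Jx = Jf[OF x] and Jr = qfunD(1)[OF Jf[OF x]]
      have "qle (qcomp Y X (DX x) (J x) G) (qcomp Y X (DX x) (J x) (qcomp Y X X Tq F))"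
        by (rule qcomp_mono[OF GTF qle_refl])
      also have "qcomp Y X (DX x) (J x) (qcomp Y X X Tq F) = qcomp Y X (DX x) (qcomp X X (DX x) (J x) Tq) F"
        by (rule qcomp_assoc[OF Fr Tqr Jr, symmetric])
      also have "qle \<dots> (qcomp Y X (DX x) (J x) F)" by (rule qcomp_mono[OF qle_refl JTq[OF x]])
      finally have "qle (qcomp Y X (DX x) (J x) G) (qcomp Y X (DX x) (J x) F)" .
      then show "qcomp Y X (DX x) (J x) F = qcomp Y X (DX x) (J x) G"
        by (rule qfun_eq[OF qfun_comp[OF Gf Jx] qfun_comp[OF Ff Jx], symmetric])
    qed
    define K where "K = (\<lambda>x. qcomp Y X (DX x) (J x) F)"
    have cone: "qset_cone Ob Ar src tgt DX DF Y K"
      unfolding qset_cone_def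
    proof (intro conjI ballI)
      fix x assume x: "x \<in> Ob"
      show "qfun Y (DX x) (K x)" unfolding K_def by (rule qfun_comp[OF Ff Jf[OF x]])
    next
      fix f assume f: "f \<in> Ar"
      have s: "src f \<in> Ob" and t: "tgt f \<in> Ob" using srctgt[OF f] by auto
      have "qcomp Y (DX (src f)) (DX (tgt f)) (DF f) (qcomp Y X (DX (src f)) (J (src f)) F)
          = qcomp Y X (DX (tgt f)) (qcomp X (DX (src f)) (DX (tgt f)) (DF f) (J (src f))) F"
        by (rule qcomp_assoc[OF Fr qfunD(1)[OF Jf[OF s]] DFr[OF f], symmetric])
      then show "qcomp Y (DX (src f)) (DX (tgt f)) (DF f) (K (src f)) = K (tgt f)"
        unfolding K_def Jcone[OF f] .
    qed
    have "\<exists>!F. qfun Y X F \<and> (\<forall>x\<in>Ob. qcomp Y X (DX x) (J x) F = K x)" by (rule univ[OF QY cone])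
    moreover have "qfun Y X F \<and> (\<forall>x\<in>Ob. qcomp Y X (DX x) (J x) F = K x)" using Ff unfolding K_def by simp
    moreover have "qfun Y X G \<and> (\<forall>x\<in>Ob. qcomp Y X (DX x) (J x) G = K x)" using Gf JFG unfolding K_def by simp
    ultimately have "F = G" by blast
    with FG show False by simp
  qed
  have posX: "qposet X R" unfolding qposet_def using QX Rr Rrefl' Rtrans' Ranti' by blast
  have pcone: "qpos_cone Ob Ar src tgt DX DR DF X R J"
    unfolding qpos_cone_def qmono_def using Jf JR Jcone by blast
  have puniv: "\<And>(Y :: 'y qset) S K. qposet Y S \<Longrightarrow> qpos_cone Ob Ar src tgt DX DR DF Y S K \<Longrightarrow>
        (\<exists>!F. qmono Y S X R F \<and> (\<forall>x\<in>Ob. qcomp Y X (DX x) (J x) F = K x))"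
  proof -
    fix Y :: "'y qset" and S K
    assume PY: "qposet Y S" and pc: "qpos_cone Ob Ar src tgt DX DR DF Y S K"
    have QY: "qset Y" and Sr: "is_qrel Y Y S" using PY unfolding qposet_def by auto
    have Km: "\<And>x. x \<in> Ob \<Longrightarrow> qmono Y S (DX x) (DR x) (K x)" using pc unfolding qpos_cone_def by blast
    have cone: "qset_cone Ob Ar src tgt DX DF Y K"
      using pc unfolding qpos_cone_def qset_cone_def qmono_def by blast
    obtain F where Ff: "qfun Y X F" and FK: "\<forall>x\<in>Ob. qcomp Y X (DX x) (J x) F = K x"
      and un: "\<And>F'. qfun Y X F' \<Longrightarrow> (\<forall>x\<in>Ob. qcomp Y X (DX x) (J x) F' = K x) \<Longrightarrow> F' = F"
      using univ[OF QY cone] by blast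
    have Fr: "is_qrel Y X F" by (rule qfunD(1)[OF Ff])
    have W: "is_qrel Y X (qcomp Y Y X F S)" by (rule qcomp_rel[OF Sr Fr])
    have mono: "qle (qcomp Y Y X F S) (qcomp Y X X R F)" unfolding R_def
    proof (rule fun_meet[OF Ff W Tr])
      fix x assume x: "x \<in> Ob"
      note Jx = Jf[OF x] and Jr = qfunD(1)[OF Jf[OF x]]
      have Kr: "is_qrel Y (DX x) (K x)" using Km[OF x] unfolding qmono_def qfun_def by blast
      have KS: "qle (qcomp Y Y (DX x) (K x) S) (qcomp Y (DX x) (DX x) (DR x) (K x))"
        using Km[OF x] unfolding qmono_def by blast
      have FK': "K x = qcomp Y X (DX x) (J x) F" using FK x by simp
      have "qcomp Y Y X F S = qcomp Y X X (qid X) (qcomp Y Y X F S)" by (rule qcomp_id_left[OF W, symmetric])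
      also have "qle \<dots> (qcomp Y X X (qcomp X (DX x) X (qadj (J x)) (J x)) (qcomp Y Y X F S))"
        by (rule qcomp_mono[OF qle_refl qfunD(3)[OF Jx]])
      also have "\<dots> = qcomp Y (DX x) X (qadj (J x)) (qcomp Y X (DX x) (J x) (qcomp Y Y X F S))"
        by (rule qcomp_assoc[OF W Jr qadj_rel[OF Jr]])
      also have "qcomp Y X (DX x) (J x) (qcomp Y Y X F S) = qcomp Y Y (DX x) (K x) S"
        unfolding FK' by (rule qcomp_assoc[OF Sr Fr Jr, symmetric])
      also have "qle (qcomp Y (DX x) X (qadj (J x)) (qcomp Y Y (DX x) (K x) S))
                     (qcomp Y (DX x) X (qadj (J x)) (qcomp Y (DX x) (DX x) (DR x) (K x)))"
        by (rule qcomp_mono[OF KS qle_refl])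
      also have "qcomp Y (DX x) (DX x) (DR x) (K x) = qcomp Y X (DX x) (qcomp X (DX x) (DX x) (DR x) (J x)) F"
        unfolding FK' by (rule qcomp_assoc[OF Fr Jr Rx[OF x], symmetric])
      also have "qcomp Y (DX x) X (qadj (J x)) (qcomp Y X (DX x) (qcomp X (DX x) (DX x) (DR x) (J x)) F)
          = qcomp Y X X (T x) F"
        unfolding T_def by (rule qcomp_assoc[OF Fr qcomp_rel[OF Jr Rx[OF x]] qadj_rel[OF Jr], symmetric])
      finally show "qle (qcomp Y Y X F S) (qcomp Y X X (T x) F)" .
    qed
    have Fm: "qmono Y S X R F" unfolding qmono_def using Ff mono by blast
    show "\<exists>!F. qmono Y S X R F \<and> (\<forall>x\<in>Ob. qcomp Y X (DX x) (J x) F = K x)"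
    proof (rule ex1I[of _ F])
      show "qmono Y S X R F \<and> (\<forall>x\<in>Ob. qcomp Y X (DX x) (J x) F = K x)" using Fm FK by blast
    next
      fix F' assume "qmono Y S X R F' \<and> (\<forall>x\<in>Ob. qcomp Y X (DX x) (J x) F' = K x)"
      then show "F' = F" using un unfolding qmono_def by blast
    qed
  qed
  have "qpos_limit TYPE('y) Ob Ar src tgt DX DR DF X R J"
    unfolding qpos_limit_def using posX pcone puniv by blast
  then show ?thesis unfolding Let_def R_def T_def using posX unfolding R_def T_def by blast
qed


end
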